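(* Let $\mathsf{X},\mathsf{Y}$ be Polish spaces and $c:\mathsf{X}\times\mathsf{Y}\to\mathbb{R}$ measurable. Let $\mu,\mu'\in\mathcal{P}(\mathsf{X})$ with $H(\mu'|\mu)<\infty$, $\nu,\nu'\in\mathcal{P}(\mathsf{Y})$ with $H(\nu'|\nu)<\infty$, and measurable $f,f':\mathsf{X}\to\mathbb{R}$, $g,g':\mathsf{Y}\to\mathbb{R}$ such that $$C_1:=\inf_{\alpha>0}\frac{2}{\alpha}\Big(\frac32+\log\int e^{\alpha|f'-f|}d\mu\Big)<\infty,\qquad C_2:=\inf_{\alpha>0}\frac{2}{\alpha}\Big(\frac32+\log\int e^{\alpha|g'-g|}d\nu\Big)<\infty.$$ Let $\pi\in\Pi(\mu,\nu)$ satisfy $d\pi=e^{f\oplus g-c}\,d(\mu\otimes\nu)$. (a) If $\pi'\in\Pi(\mu',\nu')$ and $d\pi'=e^{f'\oplus g'-c}\,d(\mu'\otimes\nu')$, then $$H(\pi'|\pi)+H(\pi|\pi')\le C_1\sqrt{H(\mu'|\mu)}+(1+C_1/2)H(\mu'|\mu)+H(\mu|\mu')+C_2\sqrt{H(\nu'|\nu)}+(1+C_2/2)H(\nu'|\nu)+H(\nu|\nu').$$ (b) If $\pi'\in\Pi(\mu',\nu')$ and $d\pi'=e^{f'\oplus g'-c}\,d(\mu\otimes\nu)$, then $$H(\pi'|\pi)+H(\pi|\pi')\le C_1\Big(\sqrt{H(\mu'|\mu)}+\tfrac12H(\mu'|\mu)\Big)+C_2\Big(\sqrt{H(\nu'|\nu)}+\tfrac12H(\nu'|\nu)\Big).$$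 Moreover, in both (a) and (b), if $\nu=\nu'$ then the requirement $C_2<\infty$ can be dropped.
   Context: Relative entropy: $H(\rho|\sigma)=\int\log\frac{d\rho}{d\sigma}\,d\rho$ if $\rho\ll\sigma$ and $+\infty$ otherwise. $\Pi(\mu,\nu)$ is the set of probability measures on $\mathsf{X}\times\mathsf{Y}$ with marginals $\mu$ and $\nu$. $(f\oplus g)(x,y):=f(x)+g(y)$. $\mathcal{P}(\mathsf{Z})$ denotes Borel probability measures on $\mathsf{Z}$. *)

theory Defs
  imports "HOL-Probability.Probability"
begin

text \<open>The integral is taken as (positive part) - (negative part) in ereal;
  for probability measures the negative part is always finite.\<close>
definition rel_entropy :: "'a measure \<Rightarrow> 'a measure \<Rightarrow> ereal" where
  "rel_entropy \<rho> \<sigma> =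
     (if sets \<rho> = sets \<sigma> \<and> absolutely_continuous \<sigma> \<rho> then
        enn2ereal (\<integral>\<^sup>+x. ennreal (max 0 (ln (enn2real (RN_deriv \<sigma> \<rho> x)))) \<partial>\<rho>)
        - enn2ereal (\<integral>\<^sup>+x. ennreal (max 0 (- ln (enn2real (RN_deriv \<sigma> \<rho> x)))) \<partial>\<rho>)
      else \<infinity>)"

definition borel_prob :: "'a::topological_space measure \<Rightarrow> bool" where
  "borel_prob \<mu> \<longleftrightarrow> prob_space \<mu> \<and> sets \<mu> = sets (borel :: 'a measure)"

definition couplings :: "'a::topological_space measure \<Rightarrow> 'b::topological_space measure
    \<Rightarrow> ('a \<times> 'b) measure set" where
  "couplings \<mu> \<nu> = {\<pi>. prob_space \<pi> \<and>
      sets \<pi> = sets ((borel :: 'a measure) \<Otimes>\<^sub>M (borel :: 'b measure)) \<and>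
      distr \<pi> borel fst = \<mu> \<and> distr \<pi> borel snd = \<nu>}"

text \<open>The constant inf_{alpha>0} (2/alpha)(3/2 + log int e^{alpha |h|} d mu), in [0,infinity].
  Values of alpha with infinite exponential moment contribute +infinity and are thus omitted.\<close>
definition exp_moment :: "'a measure \<Rightarrow> ('a \<Rightarrow> real) \<Rightarrow> real \<Rightarrow> ennreal" where
  "exp_moment \<mu> h \<alpha> = (\<integral>\<^sup>+x. ennreal (exp (\<alpha> * \<bar>h x\<bar>)) \<partial>\<mu>)"

definition tail_const :: "'a measure \<Rightarrow> ('a \<Rightarrow> real) \<Rightarrow> ereal" where
  "tail_const \<mu> h = (INF \<alpha>\<in>{\<alpha>. \<alpha> > 0 \<and> exp_moment \<mu> h \<alpha> < \<infinity>}.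
       ereal (2 / \<alpha> * (3/2 + ln (enn2real (exp_moment \<mu> h \<alpha>)))))"

end

theory Submission
  imports Defs
begin

lemma young_exp:
  fixes a b :: real assumes "0 \<le> a"
  shows "a * b \<le> a * ln a - a + exp b"
proof (cases "a = 0")
  case True then show ?thesis by simp
next
  case False
  then have a: "a > 0" using assms by simp
  have "exp b = a * exp (b - ln a)" using a by (simp add: exp_diff)
  also have "\<dots> \<ge> a * (1 + (b - ln a))"
    using a by (intro mult_left_mono) (auto simp: exp_ge_add_one_self)
  finally show ?thesis by (simp add: algebra_simps)
qed

lemma neg_ln_bound:
  fixes a :: real assumes "0 \<le> a"
  shows "a * max 0 (- ln a) \<le> 1"
proof (cases "a \<ge> 1")
  case True then show ?thesis by simp
next
  case False
  show ?thesis
  proof (cases "a = 0")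
    case True then show ?thesis by simp
  next
    case a0: False
    then have a: "0 < a" "a < 1" using assms False by auto
    have "ln (1/a) \<le> 1/a - 1" by (rule ln_le_minus_one) (use a in simp)
    then have "- ln a \<le> 1/a - 1" using a by (simp add: ln_div)
    then have "a * (- ln a) \<le> a * (1/a - 1)" using a by (intro mult_left_mono) auto
    also have "\<dots> = 1 - a" using a by (simp add: field_simps)
    finally show ?thesis using a by (auto simp: max_def)
  qed
qed

lemma exp_taylor2:
  fixes t :: real
  shows "exp t - 1 - t \<le> t\<^sup>2 / 2 * exp \<bar>t\<bar>"
proof -
  obtain s where s: "\<bar>s\<bar> \<le> \<bar>t\<bar>" "exp t = (\<Sum>m<2. (t ^ m) / fact m) + (exp s / fact 2) * t ^ 2"
    using Maclaurin_exp_le[of t 2] by blast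
  have "exp s \<le> exp \<bar>t\<bar>" using s(1) by simp
  then have "exp s * t\<^sup>2 \<le> exp \<bar>t\<bar> * t\<^sup>2" by (intro mult_right_mono) auto
  moreover have "(\<Sum>m<2. (t ^ m) / fact m) = 1 + t" by (simp add: numeral_2_eq_2)
  ultimately show ?thesis using s(2) by (simp add: fact_numeral mult.commute)
qed

lemma sq_le_exp:
  fixes y :: real assumes "0 \<le> y"
  shows "y\<^sup>2 \<le> exp y"
proof -
  obtain s where s: "\<bar>s\<bar> \<le> \<bar>y\<bar>" "exp y = (\<Sum>m<4. (y ^ m) / fact m) + (exp s / fact 4) * y ^ 4"
    using Maclaurin_exp_le[of y 4] by blast
  have "(\<Sum>m<4. (y ^ m) / fact m) = 1 + y + y^2/2 + y^3/6"
    by (simp add: numeral_eq_Suc fact_numeral)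
  moreover have "(exp s / fact 4) * y ^ 4 \<ge> 0" by simp
  moreover have "y^2 \<le> 1 + y + y^2/2 + y^3/6"
  proof -
    have "y * (y^2 - 3*y + 6) \<ge> 0" using assms
    proof (intro mult_nonneg_nonneg)
      have "y^2 - 3*y + 6 = (y - 3/2)^2 + 15/4" by (simp add: power2_eq_square algebra_simps)
      also have "\<dots> \<ge> 0" by (intro add_nonneg_nonneg) auto
      finally show "y^2 - 3*y + 6 \<ge> 0" .
    qed (use assms in auto)
    then show ?thesis by (simp add: power2_eq_square power3_eq_cube algebra_simps)
  qed
  ultimately show ?thesis using s(2) by linarith
qed

lemma real_inf_bound:
  fixes x A B :: real
  assumes "A \<ge> 0" "B \<ge> 0" and le: "\<And>l. l > 0 \<Longrightarrow> x \<le> A / l + B * l"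
  shows "x \<le> 2 * sqrt (A * B)"
proof (cases "A > 0 \<and> B > 0")
  case True
  define l where "l = sqrt (A / B)"
  have l: "l > 0" using True by (simp add: l_def)
  have "A / l = sqrt (A*B)" using True
    by (simp add: l_def real_sqrt_divide field_simps real_sqrt_mult)
  moreover have "B * l = sqrt (A*B)" using True
    by (simp add: l_def real_sqrt_divide field_simps real_sqrt_mult)
  ultimately show ?thesis using le[OF l] by simp
next
  case False
  then have "A = 0 \<or> B = 0" using assms by auto
  then show ?thesis
  proof
    assume A: "A = 0"
    have "x \<le> 0"
    proof (rule ccontr)
      assume "\<not> x \<le> 0"
      then have "x > 0" by simp
      define l where "l = x / (2 * (B + 1))"
      have "l > 0" using \<open>x > 0\<close> assms by (simp add: l_def)
      from le[OF this] A have "x \<le> B * l" by simp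
      also have "\<dots> = x * (B / (2 * (B + 1)))" by (simp add: l_def)
      also have "\<dots> < x * 1"
        using \<open>x > 0\<close> assms by (intro mult_strict_left_mono) (auto simp: divide_less_eq)
      finally show False by simp
    qed
    then show ?thesis using A by simp
  next
    assume B: "B = 0"
    have "x \<le> 0"
    proof (rule ccontr)
      assume "\<not> x \<le> 0"
      then have "x > 0" by simp
      define l where "l = 2 * (A + 1) / x"
      have "l > 0" using \<open>x > 0\<close> assms by (simp add: l_def)
      from le[OF this] B have "x \<le> A / l" by simp
      also have "\<dots> = x * (A / (2 * (A + 1)))" using \<open>x > 0\<close> assms by (simp add: l_def field_simps)
      also have "\<dots> < x * 1"
        using \<open>x > 0\<close> assms by (intro mult_strict_left_mono) (auto simp: divide_less_eq)
      finally show False by simp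
    qed
    then show ?thesis using B by simp
  qed
qed

context prob_space begin

lemma integrable_young:
  fixes f Z :: "'a \<Rightarrow> real"
  assumes [measurable]: "f \<in> borel_measurable M" "Z \<in> borel_measurable M"
    and nn: "\<And>x. 0 \<le> f x" and i1: "integrable M f" and i2: "integrable M (\<lambda>x. f x * ln (f x))"
    and i3: "integrable M (\<lambda>x. exp \<bar>Z x\<bar>)"
  shows "integrable M (\<lambda>x. Z x * f x)"
proof (rule Bochner_Integration.integrable_bound[of _ "\<lambda>x. f x * ln (f x) - f x + exp \<bar>Z x\<bar>"])
  show "integrable M (\<lambda>x. f x * ln (f x) - f x + exp \<bar>Z x\<bar>)" using i1 i2 i3 by auto
  show "AE x in M. norm (Z x * f x) \<le> norm (f x * ln (f x) - f x + exp \<bar>Z x\<bar>)"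
  proof (intro AE_I2)
    fix x
    have "f x * \<bar>Z x\<bar> \<le> f x * ln (f x) - f x + exp \<bar>Z x\<bar>" by (rule young_exp[OF nn])
    moreover have "f x * \<bar>Z x\<bar> \<ge> 0" using nn[of x] by simp
    ultimately show "norm (Z x * f x) \<le> norm (f x * ln (f x) - f x + exp \<bar>Z x\<bar>)"
      using nn[of x] by (simp add: abs_mult mult.commute)
  qed
qed simp

lemma entropy_nonneg:
  fixes f :: "'a \<Rightarrow> real"
  assumes [measurable]: "f \<in> borel_measurable M"
    and nn: "\<And>x. 0 \<le> f x" and i1: "integrable M f" and f1: "integral\<^sup>L M f = 1"
    and i2: "integrable M (\<lambda>x. f x * ln (f x))"
  shows "0 \<le> (\<integral>x. f x * ln (f x) \<partial>M)"
proof -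
  have "0 \<le> (\<integral>x. f x * ln (f x) - f x + 1 \<partial>M)"
    using young_exp[OF nn, of _ 0] by (intro integral_nonneg_AE) auto
  also have "\<dots> = (\<integral>x. f x * ln (f x) \<partial>M) - 1 + 1"
    using i1 i2 f1 by (simp add: prob_space)
  finally show ?thesis by simp
qed

lemma DV:
  fixes f Z :: "'a \<Rightarrow> real"
  assumes [measurable]: "f \<in> borel_measurable M" "Z \<in> borel_measurable M"
    and nn: "\<And>x. 0 \<le> f x" and i1: "integrable M f" and f1: "integral\<^sup>L M f = 1"
    and i2: "integrable M (\<lambda>x. f x * ln (f x))"
    and i3: "integrable M (\<lambda>x. exp (Z x))" and i4: "integrable M (\<lambda>x. Z x * f x)"
  shows "(\<integral>x. Z x * f x \<partial>M) \<le> (\<integral>x. f x * ln (f x) \<partial>M) + ln (\<integral>x. exp (Z x) \<partial>M)"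
proof -
  define C where "C = (\<integral>x. exp (Z x) \<partial>M)"
  have C: "C > 0" unfolding C_def
    using integral_less_AE_space[of "\<lambda>x. 0" "\<lambda>x. exp (Z x)"] i3 by (simp add: emeasure_space_1)
  have pt: "f x * (Z x - ln C) \<le> f x * ln (f x) - f x + exp (Z x) / C" for x
    using young_exp[OF nn, of x "Z x - ln C"] C by (simp add: exp_diff)
  have "(\<integral>x. f x * (Z x - ln C) \<partial>M) \<le> (\<integral>x. f x * ln (f x) - f x + exp (Z x) / C \<partial>M)"
    using pt i1 i2 i3 i4 by (intro integral_mono) (auto simp: right_diff_distrib mult.commute[of "f _"])
  also have "(\<integral>x. f x * ln (f x) - f x + exp (Z x) / C \<partial>M) = (\<integral>x. f x * ln (f x) \<partial>M) - 1 + 1"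
    using i1 i2 i3 f1 C by (simp add: C_def)
  also have "(\<integral>x. f x * (Z x - ln C) \<partial>M) = (\<integral>x. Z x * f x \<partial>M) - ln C"
  proof -
    have "(\<integral>x. f x * (Z x - ln C) \<partial>M) = (\<integral>x. Z x * f x - ln C * f x \<partial>M)"
      by (intro Bochner_Integration.integral_cong) (auto simp: algebra_simps)
    also have "\<dots> = (\<integral>x. Z x * f x \<partial>M) - ln C * 1"
      using i1 i4 f1 by simp
    finally show ?thesis by simp
  qed
  finally show ?thesis by (simp add: C_def)
qed

end

lemma Y2_bound:
  fixes y K l :: real assumes K: "K \<ge> 0" and l: "0 < l" "l \<le> 1"
  defines "y2 \<equiv> y - max (-K) (min K y)"
  shows "exp (l * y2) - 1 - l * y2 \<le> l\<^sup>2 / 2 * (exp (2 * \<bar>y\<bar>) / exp (2*K))"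
proof -
  define t where "t = \<bar>y2\<bar>"
  have t: "t = max 0 (\<bar>y\<bar> - K)" using K by (auto simp: t_def y2_def max_def min_def)
  have "exp (l * y2) - 1 - l * y2 \<le> (l * y2)\<^sup>2 / 2 * exp \<bar>l * y2\<bar>" by (rule exp_taylor2)
  also have "\<dots> = l\<^sup>2 / 2 * (t\<^sup>2 * exp (l * t))" using l by (simp add: t_def power_mult_distrib abs_mult power2_abs)
  also have "\<dots> \<le> l\<^sup>2 / 2 * (t\<^sup>2 * exp t)"
  proof -
    have "l * t \<le> t" using l t by (intro mult_left_le_one_le) auto
    then show ?thesis by (intro mult_left_mono) auto
  qed
  also have "\<dots> \<le> l\<^sup>2 / 2 * (exp (2 * \<bar>y\<bar>) / exp (2*K))"
  proof (intro mult_left_mono)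
    show "t\<^sup>2 * exp t \<le> exp (2 * \<bar>y\<bar>) / exp (2*K)"
    proof (cases "t = 0")
      case True then show ?thesis by simp
    next
      case False
      then have tt: "t = \<bar>y\<bar> - K" "t \<ge> 0" using t by (auto simp: max_def split: if_splits)
      have "t\<^sup>2 * exp t \<le> exp t * exp t" using sq_le_exp[OF tt(2)] by (intro mult_right_mono) auto
      also have "\<dots> = exp (2 * \<bar>y\<bar>) / exp (2*K)" using tt by (simp add: exp_add[symmetric] exp_diff[symmetric] algebra_simps)
      finally show ?thesis .
    qed
  qed simp
  finally show ?thesis .
qed

context prob_space begin

lemma WP:
  fixes f Y :: "'a \<Rightarrow> real"
  assumes [measurable]: "f \<in> borel_measurable M" "Y \<in> borel_measurable M"
    and nn: "\<And>x. 0 \<le> f x" and i1: "integrable M f" and f1: "integral\<^sup>L M f = 1"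
    and i2: "integrable M (\<lambda>x. f x * ln (f x))"
    and iY: "integrable M (\<lambda>x. exp (2 * \<bar>Y x\<bar>))"
  shows "integrable M (\<lambda>x. Y x * f x)" "integrable M Y"
    and "(\<integral>x. Y x * f x \<partial>M) - (\<integral>x. Y x \<partial>M) \<le>
      (3/2 + ln (\<integral>x. exp (2 * \<bar>Y x\<bar>) \<partial>M)) * (sqrt (\<integral>x. f x * ln (f x) \<partial>M) + (\<integral>x. f x * ln (f x) \<partial>M) / 2)"
proof -
  define H where "H = (\<integral>x. f x * ln (f x) \<partial>M)"
  define Ez where "Ez = (\<integral>x. exp (2 * \<bar>Y x\<bar>) \<partial>M)"
  define L where "L = ln Ez"
  have H0: "H \<ge> 0" unfolding H_def by (rule entropy_nonneg[OF _ nn i1 f1 i2]) simp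
  have Ez1: "Ez \<ge> 1"
  proof -
    have "(\<integral>x. 1 \<partial>M) \<le> Ez" unfolding Ez_def using iY by (intro integral_mono) auto
    then show ?thesis by (simp add: prob_space)
  qed
  then have L0: "L \<ge> 0" by (simp add: L_def)
  have iexpY: "integrable M (\<lambda>x. exp \<bar>Y x\<bar>)"
    by (rule Bochner_Integration.integrable_bound[OF iY]) auto
  have iYabs: "integrable M (\<lambda>x. \<bar>Y x\<bar>)"
  proof (rule Bochner_Integration.integrable_bound[OF iexpY])
    show "AE x in M. norm \<bar>Y x\<bar> \<le> norm (exp \<bar>Y x\<bar>)"
      by (intro AE_I2) (smt (verit) exp_ge_add_one_self real_norm_def abs_abs exp_gt_zero)
  qed auto
  show iY0: "integrable M Y" using iYabs by (simp add: integrable_abs_iff)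
  show iYf: "integrable M (\<lambda>x. Y x * f x)" by (rule integrable_young[OF _ _ nn i1 i2 iexpY]) auto
  have "(\<integral>x. Y x * f x \<partial>M) - (\<integral>x. Y x \<partial>M) \<le> (3/2 + L) * (sqrt H + H / 2)"
  proof (cases "H \<ge> 1")
    case True
    have i2Y: "integrable M (\<lambda>x. exp (2 * Y x))"
      by (rule Bochner_Integration.integrable_bound[OF iY]) auto
    have "(\<integral>x. (2 * Y x) * f x \<partial>M) \<le> H + ln (\<integral>x. exp (2 * Y x) \<partial>M)"
      unfolding H_def
      by (rule DV[OF _ _ nn i1 f1 i2 i2Y]) (use iYf in \<open>auto simp: mult.assoc\<close>)
    also have "ln (\<integral>x. exp (2 * Y x) \<partial>M) \<le> L"
    proof -
      have "(\<integral>x. exp (2 * Y x) \<partial>M) \<le> Ez" unfolding Ez_def using i2Y iY by (intro integral_mono) auto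
      moreover have "(\<integral>x. exp (2 * Y x) \<partial>M) > 0"
        using integral_less_AE_space[of "\<lambda>x. 0" "\<lambda>x. exp (2 * Y x)"] i2Y by (simp add: emeasure_space_1)
      ultimately show ?thesis unfolding L_def by simp
    qed
    finally have a: "2 * (\<integral>x. Y x * f x \<partial>M) \<le> H + L"
      by (simp add: mult.assoc)
    have "(\<integral>x. (2 * \<bar>Y x\<bar>) * 1 \<partial>M) \<le> (\<integral>x. 1 * ln 1 \<partial>M) + ln (\<integral>x. exp (2 * \<bar>Y x\<bar>) \<partial>M)"
      by (rule DV[of "\<lambda>_. 1"]) (use iY iYabs in \<open>auto simp: prob_space\<close>)
    then have b: "2 * (\<integral>x. \<bar>Y x\<bar> \<partial>M) \<le> L" by (simp add: L_def Ez_def)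
    have c: "- (\<integral>x. Y x \<partial>M) \<le> (\<integral>x. \<bar>Y x\<bar> \<partial>M)"
    proof -
      have "(\<integral>x. - Y x \<partial>M) \<le> (\<integral>x. \<bar>Y x\<bar> \<partial>M)" using iY0 iYabs by (intro integral_mono) auto
      then show ?thesis by simp
    qed
    have "(\<integral>x. Y x * f x \<partial>M) - (\<integral>x. Y x \<partial>M) \<le> H / 2 + L" using a b c by linarith
    also have "\<dots> \<le> (3/2 + L) * (sqrt H + H / 2)"
    proof -
      have s1: "sqrt H \<ge> 1" using True by simp
      have "H / 2 \<le> 3/2 * (H/2)" using H0 by simp
      moreover have "L \<le> L * sqrt H" using s1 L0 by (simp add: mult_le_cancel_left1)
      moreover have "0 \<le> 3/2 * sqrt H + L * (H/2)" using L0 H0 by simp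
      ultimately show ?thesis by (simp add: algebra_simps)
    qed
    finally show ?thesis .
  next
    case False
    then have H1: "H < 1" by simp
    define K where "K = L / 2"
    have K0: "K \<ge> 0" using L0 by (simp add: K_def)
    define Y1 where "Y1 x = max (-K) (min K (Y x))" for x
    define Y2 where "Y2 x = Y x - Y1 x" for x
    have [measurable]: "Y1 \<in> borel_measurable M" "Y2 \<in> borel_measurable M"
      unfolding Y1_def[abs_def] Y2_def[abs_def] by auto
    have Y1b: "\<bar>Y1 x\<bar> \<le> \<bar>Y x\<bar>" "\<bar>Y1 x\<bar> \<le> K" for x using K0 by (auto simp: Y1_def)
    have Y2b: "\<bar>Y2 x\<bar> \<le> \<bar>Y x\<bar>" for x using K0 by (auto simp: Y2_def Y1_def)
    have eY1: "integrable M (\<lambda>x. exp \<bar>Y1 x\<bar>)"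
      by (rule Bochner_Integration.integrable_bound[OF iexpY]) (auto intro!: AE_I2 simp: Y1b)
    have eY2: "integrable M (\<lambda>x. exp \<bar>Y2 x\<bar>)"
      by (rule Bochner_Integration.integrable_bound[OF iexpY]) (auto intro!: AE_I2 simp: Y2b)
    have iY1f: "integrable M (\<lambda>x. Y1 x * f x)"
      by (rule integrable_young[OF _ _ nn i1 i2 eY1]) auto
    have iY2f: "integrable M (\<lambda>x. Y2 x * f x)"
      by (rule integrable_young[OF _ _ nn i1 i2 eY2]) auto
    have iY1: "integrable M Y1"
      by (rule Bochner_Integration.integrable_bound[OF iYabs]) (auto intro!: AE_I2 simp: Y1b)
    have iY2: "integrable M Y2"
      by (rule Bochner_Integration.integrable_bound[OF iYabs]) (auto intro!: AE_I2 simp: Y2b)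
    have split: "(\<integral>x. Y x * f x \<partial>M) - (\<integral>x. Y x \<partial>M) =
        ((\<integral>x. Y1 x * f x \<partial>M) - (\<integral>x. Y1 x \<partial>M)) + ((\<integral>x. Y2 x * f x \<partial>M) - (\<integral>x. Y2 x \<partial>M))"
    proof -
      have "(\<integral>x. Y x * f x \<partial>M) = (\<integral>x. Y1 x * f x + Y2 x * f x \<partial>M)"
        by (intro Bochner_Integration.integral_cong) (auto simp: Y2_def algebra_simps)
      moreover have "(\<integral>x. Y x \<partial>M) = (\<integral>x. Y1 x + Y2 x \<partial>M)"
        by (intro Bochner_Integration.integral_cong) (auto simp: Y2_def algebra_simps)
      ultimately show ?thesis using iY1f iY2f iY1 iY2 by simp
    qed
    have P1: "(\<integral>x. Y1 x * f x \<partial>M) - (\<integral>x. Y1 x \<partial>M) \<le> 2 * sqrt (H * (K\<^sup>2 / 2))"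
    proof (rule real_inf_bound)
      show "0 \<le> H" by (rule H0)
      show "0 \<le> K\<^sup>2 / 2" by simp
      fix l :: real assume l: "l > 0"
      define m where "m = (\<integral>x. Y1 x \<partial>M)"
      interpret Ib: interval_bounded_random_variable M Y1 "-K" K
      proof unfold_locales
        show "AE x in M. Y1 x \<in> {-K..K}"
        proof (intro AE_I2)
          fix x show "Y1 x \<in> {-K..K}" using Y1b(2)[of x] by (simp add: abs_le_iff)
        qed
      qed simp
      have hoef: "(\<integral>\<^sup>+x. exp (l * (Y1 x - m)) \<partial>M) \<le> ennreal (exp (l\<^sup>2 * (K - - K)\<^sup>2 / 8))"
        unfolding m_def by (rule Ib.Hoeffdings_lemma_nn_integral[OF l])
      have iE: "integrable M (\<lambda>x. exp (l * (Y1 x - m)))"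
      proof (rule integrable_const_bound[where B="exp (l * (K + \<bar>m\<bar>))"])
        show "AE x in M. norm (exp (l * (Y1 x - m))) \<le> exp (l * (K + \<bar>m\<bar>))"
        proof (intro AE_I2)
          fix x
          have "Y1 x - m \<le> K + \<bar>m\<bar>" using Y1b[of x] by linarith
          then have "l * (Y1 x - m) \<le> l * (K + \<bar>m\<bar>)" using l by (intro mult_left_mono) auto
          then show "norm (exp (l * (Y1 x - m))) \<le> exp (l * (K + \<bar>m\<bar>))" by simp
        qed
      qed auto
      have "(\<integral>x. exp (l * (Y1 x - m)) \<partial>M) \<le> exp (l\<^sup>2 * (K - - K)\<^sup>2 / 8)"
      proof -
        have "ennreal (\<integral>x. exp (l * (Y1 x - m)) \<partial>M) = (\<integral>\<^sup>+x. exp (l * (Y1 x - m)) \<partial>M)"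
          by (rule nn_integral_eq_integral[symmetric]) (use iE in auto)
        then have "ennreal (\<integral>x. exp (l * (Y1 x - m)) \<partial>M) \<le> ennreal (exp (l\<^sup>2 * (K - - K)\<^sup>2 / 8))"
          using hoef by simp
        then show ?thesis by (subst (asm) ennreal_le_iff) auto
      qed
      also have "\<dots> = exp (l\<^sup>2 * K\<^sup>2 / 2)"
      proof -
        have "(K - - K)\<^sup>2 = 4 * K\<^sup>2" by (simp add: power2_eq_square)
        then show ?thesis by simp
      qed
      finally have hE: "(\<integral>x. exp (l * (Y1 x - m)) \<partial>M) \<le> exp (l\<^sup>2 * K\<^sup>2 / 2)" .
      have eqZ: "(\<lambda>x. l * (Y1 x - m) * f x) = (\<lambda>x. l * (Y1 x * f x) - (l * m) * f x)"
        by (simp add: fun_eq_iff right_diff_distrib left_diff_distrib mult.assoc)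
      have iZf: "integrable M (\<lambda>x. l * (Y1 x - m) * f x)"
        unfolding eqZ using iY1f i1 by simp
      have "(\<integral>x. l * (Y1 x - m) * f x \<partial>M) \<le> H + ln (\<integral>x. exp (l * (Y1 x - m)) \<partial>M)"
        unfolding H_def by (rule DV[OF _ _ nn i1 f1 i2 iE iZf]) auto
      also have "ln (\<integral>x. exp (l * (Y1 x - m)) \<partial>M) \<le> l\<^sup>2 * K\<^sup>2 / 2"
      proof -
        have "(\<integral>x. exp (l * (Y1 x - m)) \<partial>M) > 0"
          using integral_less_AE_space[of "\<lambda>x. 0" "\<lambda>x. exp (l * (Y1 x - m))"] iE by (simp add: emeasure_space_1)
        then show ?thesis using hE by (metis ln_exp ln_le_cancel_iff exp_gt_zero)
      qed
      also have "(\<integral>x. l * (Y1 x - m) * f x \<partial>M) = l * ((\<integral>x. Y1 x * f x \<partial>M) - m)"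
      proof -
        have "(\<integral>x. l * (Y1 x - m) * f x \<partial>M) = (\<integral>x. l * (Y1 x * f x) - (l * m) * f x \<partial>M)"
          unfolding eqZ ..
        also have "\<dots> = l * (\<integral>x. Y1 x * f x \<partial>M) - (l * m) * 1"
          using iY1f i1 f1 by simp
        finally show ?thesis by (simp add: algebra_simps)
      qed
      finally have "l * ((\<integral>x. Y1 x * f x \<partial>M) - m) \<le> H + l\<^sup>2 * K\<^sup>2 / 2" by simp
      then have "(\<integral>x. Y1 x * f x \<partial>M) - m \<le> (H + l\<^sup>2 * K\<^sup>2 / 2) / l"
        using l by (simp add: le_divide_eq mult.commute)
      also have "\<dots> = H / l + K\<^sup>2 / 2 * l" using l by (simp add: field_simps power2_eq_square)
      finally show "(\<integral>x. Y1 x * f x \<partial>M) - (\<integral>x. Y1 x \<partial>M) \<le> H / l + K\<^sup>2 / 2 * l"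
        by (simp add: m_def)
    qed
    have P2l: "(\<integral>x. Y2 x * f x \<partial>M) - (\<integral>x. Y2 x \<partial>M) \<le> H / l + l / 2" if l: "0 < l" "l \<le> 1" for l
    proof -
      have eK: "exp (2 * K) = Ez" using Ez1 by (simp add: K_def L_def)
      have pt: "l * (Y2 x * f x - Y2 x) \<le> (f x * ln (f x) - f x + 1) + l\<^sup>2 / 2 * (exp (2 * \<bar>Y x\<bar>) / Ez)" for x
      proof -
        have a: "f x * (l * Y2 x) \<le> f x * ln (f x) - f x + exp (l * Y2 x)" by (rule young_exp[OF nn])
        have b: "exp (l * Y2 x) - 1 - l * Y2 x \<le> l\<^sup>2 / 2 * (exp (2 * \<bar>Y x\<bar>) / exp (2*K))"
          unfolding Y2_def Y1_def by (rule Y2_bound[OF K0 l])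
        have c: "l * (Y2 x * f x - Y2 x) = f x * (l * Y2 x) - l * Y2 x" by (simp add: algebra_simps)
        show ?thesis using a b unfolding c eK by linarith
      qed
      have bnd: "l * Y2 x \<le> \<bar>Y x\<bar>" for x
      proof -
        have "l * Y2 x \<le> l * \<bar>Y2 x\<bar>" using l by (intro mult_left_mono) auto
        also have "\<dots> \<le> \<bar>Y2 x\<bar>" using l by (intro mult_left_le_one_le) auto
        finally show ?thesis using Y2b[of x] by linarith
      qed
      have iE2: "integrable M (\<lambda>x. exp (l * Y2 x))"
        by (rule Bochner_Integration.integrable_bound[OF iexpY]) (auto intro!: AE_I2 simp: bnd)
      have iL: "integrable M (\<lambda>x. l * (Y2 x * f x - Y2 x))" using iY2f iY2 by simp
      have iR1: "integrable M (\<lambda>x. f x * ln (f x) - f x + 1)" using i1 i2 by simp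
      have iR2: "integrable M (\<lambda>x. l\<^sup>2 / 2 * (exp (2 * \<bar>Y x\<bar>) / Ez))" using iY by simp
      have "(\<integral>x. l * (Y2 x * f x - Y2 x) \<partial>M) \<le> (\<integral>x. (f x * ln (f x) - f x + 1) + l\<^sup>2 / 2 * (exp (2 * \<bar>Y x\<bar>) / Ez) \<partial>M)"
        using pt iL iR1 iR2 by (intro integral_mono) auto
      also have "\<dots> = (\<integral>x. f x * ln (f x) - f x + 1 \<partial>M) + (\<integral>x. l\<^sup>2 / 2 * (exp (2 * \<bar>Y x\<bar>) / Ez) \<partial>M)"
        using iR1 iR2 by (rule Bochner_Integration.integral_add)
      also have "(\<integral>x. f x * ln (f x) - f x + 1 \<partial>M) = H - 1 + 1"
        using i1 i2 f1 by (simp add: H_def prob_space)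
      also have "(\<integral>x. l\<^sup>2 / 2 * (exp (2 * \<bar>Y x\<bar>) / Ez) \<partial>M) = l\<^sup>2 / 2 * (Ez / Ez)"
        by (simp add: Ez_def)
      also have "(\<integral>x. l * (Y2 x * f x - Y2 x) \<partial>M) = l * ((\<integral>x. Y2 x * f x \<partial>M) - (\<integral>x. Y2 x \<partial>M))"
        using iY2f iY2 by simp
      finally have "l * ((\<integral>x. Y2 x * f x \<partial>M) - (\<integral>x. Y2 x \<partial>M)) \<le> H + l\<^sup>2 / 2" using Ez1 by simp
      then have "(\<integral>x. Y2 x * f x \<partial>M) - (\<integral>x. Y2 x \<partial>M) \<le> (H + l\<^sup>2 / 2) / l"
        using l by (simp add: le_divide_eq mult.commute)
      also have "\<dots> = H / l + l / 2" using l by (simp add: field_simps power2_eq_square)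
      finally show ?thesis .
    qed
    have P2: "(\<integral>x. Y2 x * f x \<partial>M) - (\<integral>x. Y2 x \<partial>M) \<le> 3/2 * sqrt H"
    proof (cases "H = 0")
      case True
      have "(\<integral>x. Y2 x * f x \<partial>M) - (\<integral>x. Y2 x \<partial>M) \<le> 0"
      proof (rule ccontr)
        define z where "z = (\<integral>x. Y2 x * f x \<partial>M) - (\<integral>x. Y2 x \<partial>M)"
        assume "\<not> (\<integral>x. Y2 x * f x \<partial>M) - (\<integral>x. Y2 x \<partial>M) \<le> 0"
        then have z: "z > 0" by (simp add: z_def)
        have "0 < min 1 z" "min 1 z \<le> 1" using z by auto
        from P2l[OF this] have "z \<le> H / min 1 z + min 1 z / 2" unfolding z_def[symmetric] .
        also have "\<dots> < z" using True z by (auto simp: min_def)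
        finally show False by simp
      qed
      then show ?thesis using True by simp
    next
      case False
      then have Hp: "H > 0" using H0 by simp
      have "(\<integral>x. Y2 x * f x \<partial>M) - (\<integral>x. Y2 x \<partial>M) \<le> H / sqrt H + sqrt H / 2"
        by (rule P2l) (use Hp H1 in auto)
      also have "H / sqrt H = sqrt H" using Hp by (simp add: real_div_sqrt)
      finally show ?thesis by simp
    qed
    have "(\<integral>x. Y x * f x \<partial>M) - (\<integral>x. Y x \<partial>M) \<le> 2 * sqrt (H * (K\<^sup>2 / 2)) + 3/2 * sqrt H"
      using split P1 P2 by linarith
    also have "2 * sqrt (H * (K\<^sup>2 / 2)) = sqrt 2 * K * sqrt H"
    proof -
      have "2 * sqrt (H * (K\<^sup>2 / 2)) = sqrt 4 * sqrt (H * (K\<^sup>2 / 2))" by (simp add: real_sqrt_four)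
      also have "\<dots> = sqrt (4 * (H * (K\<^sup>2 / 2)))" by (simp only: real_sqrt_mult)
      also have "\<dots> = sqrt (2 * H * K\<^sup>2)" by simp
      also have "\<dots> = sqrt 2 * sqrt H * K" using K0 by (simp add: real_sqrt_mult)
      finally show ?thesis by simp
    qed
    also have "sqrt 2 * K * sqrt H + 3/2 * sqrt H \<le> (3/2 + L) * (sqrt H + H / 2)"
    proof -
      have "sqrt 2 \<le> 2" using real_sqrt_le_mono[of 2 4] real_sqrt_four by linarith
      then have "sqrt 2 * K \<le> 2 * K" using K0 by (intro mult_right_mono) auto
      then have "sqrt 2 * K \<le> L" by (simp add: K_def)
      then have "sqrt 2 * K * sqrt H \<le> L * sqrt H" using H0 by (intro mult_right_mono) auto
      moreover have "0 \<le> (3/2 + L) * (H / 2)" using L0 H0 by simp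
      ultimately show ?thesis by (simp add: algebra_simps)
    qed
    finally show ?thesis .
  qed
  then show "(\<integral>x. Y x * f x \<partial>M) - (\<integral>x. Y x \<partial>M) \<le>
      (3/2 + ln (\<integral>x. exp (2 * \<bar>Y x\<bar>) \<partial>M)) * (sqrt (\<integral>x. f x * ln (f x) \<partial>M) + (\<integral>x. f x * ln (f x) \<partial>M) / 2)"
    by (simp add: H_def L_def Ez_def)
qed

end

lemma ennreal_max0: "ennreal (max 0 x) = ennreal x"
  by (auto simp: max_def ennreal_neg)

lemma RE_density:
  fixes P Q :: "'a measure" and R :: "'a \<Rightarrow> real"
  assumes P: "prob_space P" and Qp: "prob_space Q" and R[measurable]: "R \<in> borel_measurable P"
    and nn: "\<And>x. 0 \<le> R x" and Q: "Q = density P (\<lambda>x. ennreal (R x))"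
  shows "rel_entropy Q P = enn2ereal (\<integral>\<^sup>+x. ennreal (ln (R x)) \<partial>Q) - enn2ereal (\<integral>\<^sup>+x. ennreal (- ln (R x)) \<partial>Q)"
    and "(\<integral>\<^sup>+x. ennreal (- ln (R x)) \<partial>Q) \<le> 1"
proof -
  interpret P: prob_space P by fact
  have sets: "sets Q = sets P" using Q by simp
  have ac: "absolutely_continuous P Q" unfolding Q by (rule absolutely_continuousI_density) simp
  have "AE x in P. ennreal (R x) = RN_deriv P Q x"
    by (rule P.RN_deriv_unique) (auto simp: Q)
  then have "AE x in Q. ennreal (R x) = RN_deriv P Q x"
    by (rule absolutely_continuous_AE[OF sets ac])
  then have ae: "AE x in Q. enn2real (RN_deriv P Q x) = R x"
    by eventually_elim (metis enn2real_ennreal nn)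
  have "rel_entropy Q P = enn2ereal (\<integral>\<^sup>+x. ennreal (max 0 (ln (enn2real (RN_deriv P Q x)))) \<partial>Q)
        - enn2ereal (\<integral>\<^sup>+x. ennreal (max 0 (- ln (enn2real (RN_deriv P Q x)))) \<partial>Q)"
    unfolding rel_entropy_def using sets ac by simp
  also have "(\<integral>\<^sup>+x. ennreal (max 0 (ln (enn2real (RN_deriv P Q x)))) \<partial>Q) = (\<integral>\<^sup>+x. ennreal (ln (R x)) \<partial>Q)"
    using ae by (intro nn_integral_cong_AE) (auto simp: ennreal_max0)
  also have "(\<integral>\<^sup>+x. ennreal (max 0 (- ln (enn2real (RN_deriv P Q x)))) \<partial>Q) = (\<integral>\<^sup>+x. ennreal (- ln (R x)) \<partial>Q)"
    using ae by (intro nn_integral_cong_AE) (auto simp: ennreal_max0)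
  finally show "rel_entropy Q P = enn2ereal (\<integral>\<^sup>+x. ennreal (ln (R x)) \<partial>Q) - enn2ereal (\<integral>\<^sup>+x. ennreal (- ln (R x)) \<partial>Q)" .
  have "(\<integral>\<^sup>+x. ennreal (- ln (R x)) \<partial>Q) = (\<integral>\<^sup>+x. ennreal (R x) * ennreal (- ln (R x)) \<partial>P)"
    unfolding Q by (rule nn_integral_density) auto
  also have "\<dots> \<le> (\<integral>\<^sup>+x. 1 \<partial>P)"
  proof (intro nn_integral_mono)
    fix x
    have "ennreal (R x) * ennreal (- ln (R x)) = ennreal (R x * max 0 (- ln (R x)))"
    proof -
      have "ennreal (- ln (R x)) = ennreal (max 0 (- ln (R x)))" by (rule ennreal_max0[symmetric])
      then show ?thesis using nn[of x] by (simp only: ennreal_mult'' [symmetric])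
    qed
    also have "\<dots> \<le> 1" using neg_ln_bound[OF nn[of x]] by (simp add: ennreal_le_1)
    finally show "ennreal (R x) * ennreal (- ln (R x)) \<le> 1" .
  qed
  also have "\<dots> = 1" by (simp add: P.emeasure_space_1)
  finally show "(\<integral>\<^sup>+x. ennreal (- ln (R x)) \<partial>Q) \<le> 1" .
qed

lemma RE_density_integrable:
  fixes P Q :: "'a measure" and R :: "'a \<Rightarrow> real"
  assumes P: "prob_space P" and Qp: "prob_space Q" and R[measurable]: "R \<in> borel_measurable P"
    and nn: "\<And>x. 0 \<le> R x" and Q: "Q = density P (\<lambda>x. ennreal (R x))"
    and int: "integrable Q (\<lambda>x. ln (R x))"
  shows "rel_entropy Q P = ereal (\<integral>x. ln (R x) \<partial>Q)"
proof -
  from integrableE[OF int] obtain r q where rq: "0 \<le> r" "0 \<le> q"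
    "(\<integral>\<^sup>+x. ennreal (ln (R x)) \<partial>Q) = ennreal r" "(\<integral>\<^sup>+x. ennreal (- ln (R x)) \<partial>Q) = ennreal q"
    "(\<integral>x. ln (R x) \<partial>Q) = r - q" by blast
  have "enn2ereal (ennreal r) - enn2ereal (ennreal q) = ereal (r - q)" using rq(1,2) by simp
  then show ?thesis unfolding RE_density(1)[OF assms(1-5)] rq(3,4,5) .
qed

lemma RE_density_finite:
  fixes P Q :: "'a measure" and R :: "'a \<Rightarrow> real"
  assumes P: "prob_space P" and Qp: "prob_space Q" and R[measurable]: "R \<in> borel_measurable P"
    and nn: "\<And>x. 0 \<le> R x" and Q: "Q = density P (\<lambda>x. ennreal (R x))"
    and fin: "rel_entropy Q P < \<infinity>"
  shows "integrable Q (\<lambda>x. ln (R x))"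
proof -
  have sets: "sets Q = sets P" using Q by simp
  have mR: "R \<in> borel_measurable Q" using R unfolding measurable_cong_sets[OF sets refl] .
  define A where "A = (\<integral>\<^sup>+x. ennreal (ln (R x)) \<partial>Q)"
  define B where "B = (\<integral>\<^sup>+x. ennreal (- ln (R x)) \<partial>Q)"
  have B: "B \<le> 1" unfolding B_def by (rule RE_density(2)[OF assms(1-5)])
  then have Bfin: "B \<noteq> \<infinity>" by (auto simp: top_unique)
  have A: "A \<noteq> \<infinity>"
  proof
    assume "A = \<infinity>"
    moreover have "B = ennreal (enn2real B)" using Bfin by (simp add: less_top)
    ultimately have "rel_entropy Q P = enn2ereal \<infinity> - enn2ereal (ennreal (enn2real B))"
      unfolding RE_density(1)[OF assms(1-5)] A_def[symmetric] B_def[symmetric] by simp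
    also have "\<dots> = \<infinity>" by simp
    finally have "rel_entropy Q P = \<infinity>" .
    with fin show False by simp
  qed
  have "(\<lambda>x. ln (R x)) \<in> borel_measurable Q" using mR by measurable
  then show ?thesis unfolding real_integrable_def using A Bfin unfolding A_def B_def by blast
qed

lemma RE_finite_RN:
  fixes P Q :: "'a measure"
  assumes P: "prob_space P" and Qp: "prob_space Q" and fin: "rel_entropy Q P < \<infinity>"
  defines "p \<equiv> \<lambda>x. enn2real (RN_deriv P Q x)"
  shows "sets Q = sets P" "absolutely_continuous P Q" "Q = density P (\<lambda>x. ennreal (p x))"
    "p \<in> borel_measurable P"
proof -
  interpret P: prob_space P by fact
  interpret Q: prob_space Q by fact
  show sets: "sets Q = sets P" and ac: "absolutely_continuous P Q"
    using fin unfolding rel_entropy_def by (auto split: if_splits)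
  have "Q = density P (RN_deriv P Q)" using P.density_RN_deriv[OF ac sets] by simp
  also have "\<dots> = density P (\<lambda>x. ennreal (p x))"
  proof (rule density_cong)
    have "AE x in P. RN_deriv P Q x \<noteq> \<infinity>"
      by (rule P.RN_deriv_finite[OF _ ac sets]) (simp add: Q.sigma_finite_measure_axioms)
    then show "AE x in P. RN_deriv P Q x = ennreal (p x)"
      by eventually_elim (auto simp: p_def less_top)
  qed (auto simp: p_def)
  finally show "Q = density P (\<lambda>x. ennreal (p x))" .
  show "p \<in> borel_measurable P" unfolding p_def by simp
qed

lemma RE_self: assumes "prob_space P" shows "rel_entropy P P = 0"
proof -
  have "rel_entropy P P = ereal (\<integral>x. ln ((\<lambda>_. 1::real) x) \<partial>P)"
    by (rule RE_density_integrable[OF assms assms]) (auto simp: density_1)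
  then show ?thesis by simp
qed

lemma INF_bound:
  fixes c :: "real \<Rightarrow> real" and D s :: real
  assumes ne: "S \<noteq> {}" and b: "\<And>a. a \<in> S \<Longrightarrow> D \<le> c a * s" and c0: "\<And>a. a \<in> S \<Longrightarrow> c a \<ge> 0"
    and s: "s \<ge> 0" and fin: "(INF a\<in>S. ereal (c a)) < \<infinity>"
  shows "\<exists>c0. (INF a\<in>S. ereal (c a)) = ereal c0 \<and> 0 \<le> c0 \<and> D \<le> c0 * s"
proof -
  define I where "I = (INF a\<in>S. ereal (c a))"
  have I0: "0 \<le> I" unfolding I_def by (rule INF_greatest) (use c0 in auto)
  obtain c1 where c1: "I = ereal c1" using I0 fin unfolding I_def[symmetric]
    by (cases I) auto
  have "D \<le> c1 * s"
  proof (cases "s = 0")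
    case True
    from ne obtain a where "a \<in> S" by auto
    with b[OF this] True show ?thesis by simp
  next
    case False
    then have sp: "s > 0" using s by simp
    have "ereal (D / s) \<le> I" unfolding I_def
    proof (rule INF_greatest)
      fix a assume "a \<in> S"
      from b[OF this] have "D / s \<le> c a" using sp by (simp add: divide_le_eq)
      then show "ereal (D / s) \<le> ereal (c a)" by simp
    qed
    then have "D / s \<le> c1" using c1 by simp
    then show ?thesis using sp by (simp add: divide_le_eq)
  qed
  then show ?thesis using c1 I0 by (auto simp: I_def)
qed

lemma TC:
  fixes \<mu> :: "'a measure" and p h :: "'a \<Rightarrow> real"
  assumes P: "prob_space \<mu>" and [measurable]: "h \<in> borel_measurable \<mu>" "p \<in> borel_measurable \<mu>"
    and nn: "\<And>x. 0 \<le> p x" and i1: "integrable \<mu> p" and f1: "integral\<^sup>L \<mu> p = 1"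
    and i2: "integrable \<mu> (\<lambda>x. p x * ln (p x))" and tc: "tail_const \<mu> h < \<infinity>"
  shows "integrable \<mu> h" "integrable \<mu> (\<lambda>x. h x * p x)"
    "\<exists>c. tail_const \<mu> h = ereal c \<and> 0 \<le> c \<and>
       (\<integral>x. h x * p x \<partial>\<mu>) - (\<integral>x. h x \<partial>\<mu>) \<le>
          c * (sqrt (\<integral>x. p x * ln (p x) \<partial>\<mu>) + (\<integral>x. p x * ln (p x) \<partial>\<mu>) / 2)"
proof -
  interpret prob_space \<mu> by fact
  define S where "S = {\<alpha>. \<alpha> > 0 \<and> exp_moment \<mu> h \<alpha> < \<infinity>}"
  define c where "c \<alpha> = 2 / \<alpha> * (3/2 + ln (enn2real (exp_moment \<mu> h \<alpha>)))" for \<alpha>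
  define H where "H = (\<integral>x. p x * ln (p x) \<partial>\<mu>)"
  have tcd: "tail_const \<mu> h = (INF \<alpha>\<in>S. ereal (c \<alpha>))" unfolding tail_const_def S_def c_def ..
  have ne: "S \<noteq> {}"
  proof
    assume "S = {}"
    then have "tail_const \<mu> h = top" unfolding tcd by simp
    then show False using tc by (simp add: top_ereal_def)
  qed
  have H0: "H \<ge> 0" unfolding H_def by (rule entropy_nonneg[OF _ nn i1 f1 i2]) simp
  have key: "integrable \<mu> h \<and> integrable \<mu> (\<lambda>x. h x * p x) \<and> c \<alpha> \<ge> 0 \<and>
      (\<integral>x. h x * p x \<partial>\<mu>) - (\<integral>x. h x \<partial>\<mu>) \<le> c \<alpha> * (sqrt H + H / 2)" if a: "\<alpha> \<in> S" for \<alpha>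
  proof -
    have ap: "\<alpha> > 0" and fin: "(\<integral>\<^sup>+x. ennreal (exp (\<alpha> * \<bar>h x\<bar>)) \<partial>\<mu>) < \<infinity>"
      using a by (auto simp: S_def exp_moment_def)
    define Y where "Y x = \<alpha> / 2 * h x" for x
    have [measurable]: "Y \<in> borel_measurable \<mu>" unfolding Y_def[abs_def] by simp
    have eY: "exp (2 * \<bar>Y x\<bar>) = exp (\<alpha> * \<bar>h x\<bar>)" for x using ap by (simp add: Y_def abs_mult)
    have iE: "integrable \<mu> (\<lambda>x. exp (\<alpha> * \<bar>h x\<bar>))"
      unfolding real_integrable_def using fin by (auto simp: ennreal_neg)
    have em: "enn2real (exp_moment \<mu> h \<alpha>) = (\<integral>x. exp (\<alpha> * \<bar>h x\<bar>) \<partial>\<mu>)"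
    proof -
      have "exp_moment \<mu> h \<alpha> = ennreal (\<integral>x. exp (\<alpha> * \<bar>h x\<bar>) \<partial>\<mu>)"
        unfolding exp_moment_def by (rule nn_integral_eq_integral[OF iE]) simp
      moreover have "0 \<le> (\<integral>x. exp (\<alpha> * \<bar>h x\<bar>) \<partial>\<mu>)" by (rule integral_nonneg_AE) simp
      ultimately show ?thesis by simp
    qed
    have iY: "integrable \<mu> (\<lambda>x. exp (2 * \<bar>Y x\<bar>))" unfolding eY by (rule iE)
    note W = WP[OF _ _ nn i1 f1 i2 iY]
    have W1: "integrable \<mu> (\<lambda>x. Y x * p x)" by (rule W(1)) simp_all
    have W2: "integrable \<mu> Y" by (rule W(2)) simp_all
    have W3: "(\<integral>x. Y x * p x \<partial>\<mu>) - (\<integral>x. Y x \<partial>\<mu>) \<le> (3/2 + ln (\<integral>x. exp (\<alpha> * \<bar>h x\<bar>) \<partial>\<mu>)) * (sqrt H + H / 2)"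
    proof -
      have "(\<integral>x. exp (2 * \<bar>Y x\<bar>) \<partial>\<mu>) = (\<integral>x. exp (\<alpha> * \<bar>h x\<bar>) \<partial>\<mu>)" by (simp only: eY)
      then show ?thesis using W(3) unfolding H_def by simp
    qed
    have hY: "h x = 2 / \<alpha> * Y x" for x using ap by (simp add: Y_def)
    have ih: "integrable \<mu> h" using W2 hY[abs_def] by (subst hY[abs_def]) simp
    have ihp: "integrable \<mu> (\<lambda>x. h x * p x)" using W1 by (subst hY[abs_def]) (simp add: mult.assoc)
    have Ez1: "1 \<le> (\<integral>x. exp (\<alpha> * \<bar>h x\<bar>) \<partial>\<mu>)"
    proof -
      have "(\<integral>x. 1 \<partial>\<mu>) \<le> (\<integral>x. exp (\<alpha> * \<bar>h x\<bar>) \<partial>\<mu>)" using iE ap by (intro integral_mono) auto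
      then show ?thesis by (simp add: prob_space)
    qed
    have c0: "c \<alpha> \<ge> 0" unfolding c_def em using Ez1 ap by simp
    have "(\<integral>x. h x * p x \<partial>\<mu>) - (\<integral>x. h x \<partial>\<mu>) = 2 / \<alpha> * ((\<integral>x. Y x * p x \<partial>\<mu>) - (\<integral>x. Y x \<partial>\<mu>))"
    proof -
      have "(\<integral>x. h x * p x \<partial>\<mu>) = (\<integral>x. 2 / \<alpha> * (Y x * p x) \<partial>\<mu>)"
        by (intro Bochner_Integration.integral_cong) (auto simp: hY[of _])
      moreover have "(\<integral>x. h x \<partial>\<mu>) = (\<integral>x. 2 / \<alpha> * Y x \<partial>\<mu>)"
        by (intro Bochner_Integration.integral_cong) (auto simp: hY[of _])
      ultimately show ?thesis by (simp add: right_diff_distrib)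
    qed
    also have "\<dots> \<le> 2 / \<alpha> * ((3/2 + ln (\<integral>x. exp (\<alpha> * \<bar>h x\<bar>) \<partial>\<mu>)) * (sqrt H + H / 2))"
      using W3 ap by (intro mult_left_mono) auto
    also have "\<dots> = c \<alpha> * (sqrt H + H / 2)" unfolding c_def em by simp
    finally show ?thesis using ih ihp c0 by blast
  qed
  from ne obtain a0 where a0: "a0 \<in> S" by auto
  show "integrable \<mu> h" "integrable \<mu> (\<lambda>x. h x * p x)" using key[OF a0] by auto
  have "\<exists>c0. (INF a\<in>S. ereal (c a)) = ereal c0 \<and> 0 \<le> c0 \<and>
      (\<integral>x. h x * p x \<partial>\<mu>) - (\<integral>x. h x \<partial>\<mu>) \<le> c0 * (sqrt H + H / 2)"
    by (rule INF_bound[OF ne]) (use key H0 tc tcd in auto)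
  then show "\<exists>c. tail_const \<mu> h = ereal c \<and> 0 \<le> c \<and>
       (\<integral>x. h x * p x \<partial>\<mu>) - (\<integral>x. h x \<partial>\<mu>) \<le>
          c * (sqrt (\<integral>x. p x * ln (p x) \<partial>\<mu>) + (\<integral>x. p x * ln (p x) \<partial>\<mu>) / 2)"
    unfolding tcd H_def .
qed

lemma core_dir:
  fixes P Q :: "('a::topological_space \<times> 'b::topological_space) measure" and R :: "'a \<times> 'b \<Rightarrow> real"
    and A :: "'a \<Rightarrow> real" and B :: "'b \<Rightarrow> real" and \<mu>1 :: "'a measure" and \<nu>1 :: "'b measure"
  assumes P: "prob_space P" and Qp: "prob_space Q" and sP: "sets P = sets (borel \<Otimes>\<^sub>M borel)"
    and R[measurable]: "R \<in> borel_measurable P" and nn: "\<And>z. 0 \<le> R z"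
    and Q: "Q = density P (\<lambda>z. ennreal (R z))"
    and d1: "distr Q borel fst = \<mu>1" and d2: "distr Q borel snd = \<nu>1"
    and [measurable]: "A \<in> borel_measurable borel" "B \<in> borel_measurable borel"
    and iA: "integrable \<mu>1 A" and iB: "integrable \<nu>1 B"
    and ae: "AE z in Q. ln (R z) = A (fst z) + B (snd z)"
  shows "rel_entropy Q P = ereal ((\<integral>x. A x \<partial>\<mu>1) + (\<integral>y. B y \<partial>\<nu>1))"
proof -
  have sQ[measurable_cong]: "sets Q = sets (borel \<Otimes>\<^sub>M borel)" using Q sP by simp
  have mfst: "fst \<in> measurable Q borel" and msnd: "snd \<in> measurable Q borel"
    unfolding measurable_cong_sets[OF sQ refl] by auto
  have mR: "R \<in> borel_measurable Q" using R unfolding measurable_cong_sets[OF sQ refl] measurable_cong_sets[OF sP refl] .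
  have iA': "integrable Q (\<lambda>z. A (fst z))"
    using iA unfolding d1[symmetric] by (subst (asm) integrable_distr_eq[OF mfst]) auto
  have iB': "integrable Q (\<lambda>z. B (snd z))"
    using iB unfolding d2[symmetric] by (subst (asm) integrable_distr_eq[OF msnd]) auto
  have m1: "(\<lambda>z. ln (R z)) \<in> borel_measurable Q" using mR by measurable
  have m2: "(\<lambda>z. A (fst z) + B (snd z)) \<in> borel_measurable Q" by measurable
  have iL: "integrable Q (\<lambda>z. ln (R z))"
    using integrable_cong_AE[OF m1 m2 ae] iA' iB' by simp
  have "rel_entropy Q P = ereal (\<integral>z. ln (R z) \<partial>Q)"
    by (rule RE_density_integrable[OF P Qp R nn Q iL])
  also have "(\<integral>z. ln (R z) \<partial>Q) = (\<integral>z. A (fst z) + B (snd z) \<partial>Q)"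
    by (rule integral_cong_AE[OF m1 m2 ae])
  also have "\<dots> = (\<integral>z. A (fst z) \<partial>Q) + (\<integral>z. B (snd z) \<partial>Q)"
    using iA' iB' by (rule Bochner_Integration.integral_add)
  also have "(\<integral>z. A (fst z) \<partial>Q) = (\<integral>x. A x \<partial>\<mu>1)"
    unfolding d1[symmetric] by (rule integral_distr[symmetric, OF mfst]) simp
  also have "(\<integral>z. B (snd z) \<partial>Q) = (\<integral>y. B y \<partial>\<nu>1)"
    unfolding d2[symmetric] by (rule integral_distr[symmetric, OF msnd]) simp
  finally show ?thesis .
qed

lemma ennreal_add_le: "ennreal (x + y) \<le> ennreal x + ennreal y"
proof -
  have "ennreal (x + y) \<le> ennreal (max 0 x + max 0 y)" by (intro ennreal_leI) auto
  also have "\<dots> = ennreal (max 0 x) + ennreal (max 0 y)" by (rule ennreal_plus) auto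
  finally show ?thesis by (simp only: ennreal_max0)
qed

lemma negpart_dir:
  fixes P Q :: "('a::topological_space \<times> 'b::topological_space) measure" and R :: "'a \<times> 'b \<Rightarrow> real"
    and A :: "'a \<Rightarrow> real" and B :: "'b \<Rightarrow> real" and \<mu>1 :: "'a measure" and \<nu>1 :: "'b measure"
  assumes P: "prob_space P" and Qp: "prob_space Q" and sP: "sets P = sets (borel \<Otimes>\<^sub>M borel)"
    and R[measurable]: "R \<in> borel_measurable P" and nn: "\<And>z. 0 \<le> R z"
    and Q: "Q = density P (\<lambda>z. ennreal (R z))"
    and d1: "distr Q borel fst = \<mu>1" and d2: "distr Q borel snd = \<nu>1"
    and [measurable]: "A \<in> borel_measurable borel" "B \<in> borel_measurable borel"
    and iA: "integrable \<mu>1 A"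
    and ae: "AE z in Q. ln (R z) = A (fst z) + B (snd z)"
  shows "(\<integral>\<^sup>+y. ennreal (- B y) \<partial>\<nu>1) < \<infinity>"
proof -
  have sQ[measurable_cong]: "sets Q = sets (borel \<Otimes>\<^sub>M borel)" using Q sP by simp
  have mfst: "fst \<in> measurable Q borel" and msnd: "snd \<in> measurable Q borel"
    unfolding measurable_cong_sets[OF sQ refl] by auto
  have mR: "R \<in> borel_measurable Q" using R unfolding measurable_cong_sets[OF sQ refl] measurable_cong_sets[OF sP refl] .
  have iA': "integrable Q (\<lambda>z. A (fst z))"
    using iA unfolding d1[symmetric] by (subst (asm) integrable_distr_eq[OF mfst]) auto
  have "(\<integral>\<^sup>+y. ennreal (- B y) \<partial>\<nu>1) = (\<integral>\<^sup>+z. ennreal (- B (snd z)) \<partial>Q)"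
    unfolding d2[symmetric] by (rule nn_integral_distr[OF msnd]) simp
  also have "\<dots> \<le> (\<integral>\<^sup>+z. ennreal (- ln (R z)) + ennreal (A (fst z)) \<partial>Q)"
  proof (rule nn_integral_mono_AE)
    show "AE z in Q. ennreal (- B (snd z)) \<le> ennreal (- ln (R z)) + ennreal (A (fst z))"
      using ae
    proof eventually_elim
      case (elim z)
      then have "- B (snd z) = - ln (R z) + A (fst z)" by simp
      then show ?case using ennreal_add_le[of "- ln (R z)" "A (fst z)"] by simp
    qed
  qed
  also have "\<dots> = (\<integral>\<^sup>+z. ennreal (- ln (R z)) \<partial>Q) + (\<integral>\<^sup>+z. ennreal (A (fst z)) \<partial>Q)"
    using mR by (intro nn_integral_add) auto
  also have "\<dots> < \<infinity>"
  proof -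
    have "(\<integral>\<^sup>+z. ennreal (- ln (R z)) \<partial>Q) \<le> 1" by (rule RE_density(2)[OF P Qp R nn Q])
    then have a: "(\<integral>\<^sup>+z. ennreal (- ln (R z)) \<partial>Q) < \<infinity>" unfolding infinity_ennreal_def by (rule order.strict_trans1[OF _ ennreal_one_less_top])
    have b: "(\<integral>\<^sup>+z. ennreal (A (fst z)) \<partial>Q) < \<infinity>" using integrableD(2)[OF iA'] by (simp add: less_top)
    show ?thesis using a b unfolding infinity_ennreal_def by (rule ennreal_add_less_top[THEN iffD2, OF conjI])
  qed
  finally show ?thesis .
qed

lemma RE_RN:
  fixes P Q :: "'a measure"
  assumes P: "prob_space P" and Qp: "prob_space Q" and sets: "sets Q = sets P" and ac: "absolutely_continuous P Q"
  shows "Q = density P (\<lambda>x. ennreal (enn2real (RN_deriv P Q x)))"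
proof -
  interpret P: prob_space P by fact
  interpret Q: prob_space Q by fact
  have "Q = density P (RN_deriv P Q)" using P.density_RN_deriv[OF ac sets] by simp
  also have "\<dots> = density P (\<lambda>x. ennreal (enn2real (RN_deriv P Q x)))"
  proof (rule density_cong)
    have "AE x in P. RN_deriv P Q x \<noteq> \<infinity>"
      by (rule P.RN_deriv_finite[OF _ ac sets]) (simp add: Q.sigma_finite_measure_axioms)
    then show "AE x in P. RN_deriv P Q x = ennreal (enn2real (RN_deriv P Q x))"
      by eventually_elim (auto simp: less_top)
  qed auto
  finally show ?thesis .
qed

lemma RE_ne_minf:
  fixes P Q :: "'a measure"
  assumes P: "prob_space P" and Qp: "prob_space Q"
  shows "rel_entropy Q P \<noteq> -\<infinity>"
proof (cases "sets Q = sets P \<and> absolutely_continuous P Q")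
  case False
  then show ?thesis unfolding rel_entropy_def by auto
next
  case True
  define p where "p x = enn2real (RN_deriv P Q x)" for x
  have Q: "Q = density P (\<lambda>x. ennreal (p x))" unfolding p_def using RE_RN[OF P Qp] True by auto
  have mp: "p \<in> borel_measurable P" unfolding p_def by simp
  have nn: "\<And>x. 0 \<le> p x" unfolding p_def by simp
  note E = RE_density[OF P Qp mp nn Q]
  define A where "A = (\<integral>\<^sup>+x. ennreal (ln (p x)) \<partial>Q)"
  define B where "B = (\<integral>\<^sup>+x. ennreal (- ln (p x)) \<partial>Q)"
  have "B \<le> 1" unfolding B_def by (rule E(2))
  then have b: "enn2ereal B \<le> 1" by (metis less_eq_ennreal.rep_eq one_ennreal.rep_eq)
  have a: "0 \<le> enn2ereal A" by simp
  have "0 - 1 \<le> enn2ereal A - enn2ereal B" by (rule ereal_minus_mono[OF a b])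
  then have ge: "-1 \<le> rel_entropy Q P" unfolding E(1) A_def[symmetric] B_def[symmetric] by simp
  show ?thesis
  proof
    assume "rel_entropy Q P = -\<infinity>"
    with ge show False by simp
  qed
qed

lemma RE_facts:
  fixes P Q :: "'a measure"
  assumes P: "prob_space P" and Qp: "prob_space Q" and fin: "rel_entropy Q P < \<infinity>"
  defines "p \<equiv> \<lambda>x. enn2real (RN_deriv P Q x)"
  shows "Q = density P (\<lambda>x. ennreal (p x))" "p \<in> borel_measurable P" "\<And>x. 0 \<le> p x"
    "integrable P p" "integral\<^sup>L P p = 1" "integrable P (\<lambda>x. p x * ln (p x))"
    "integrable Q (\<lambda>x. ln (p x))" "rel_entropy Q P = ereal (\<integral>x. ln (p x) \<partial>Q)"
    "(\<integral>x. ln (p x) \<partial>Q) = (\<integral>x. p x * ln (p x) \<partial>P)"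
proof -
  interpret P: prob_space P by fact
  interpret Q: prob_space Q by fact
  note RN = RE_finite_RN[OF P Qp fin]
  show Q: "Q = density P (\<lambda>x. ennreal (p x))" unfolding p_def by (rule RN(3))
  show mp: "p \<in> borel_measurable P" unfolding p_def by simp
  show nn: "\<And>x. 0 \<le> p x" unfolding p_def by simp
  show iL: "integrable Q (\<lambda>x. ln (p x))" by (rule RE_density_finite[OF P Qp mp nn Q fin])
  show "rel_entropy Q P = ereal (\<integral>x. ln (p x) \<partial>Q)" by (rule RE_density_integrable[OF P Qp mp nn Q iL])
  have mpl: "(\<lambda>x. ln (p x)) \<in> borel_measurable P" using mp by measurable
  have "integrable Q (\<lambda>x. ln (p x)) \<longleftrightarrow> integrable P (\<lambda>x. p x *\<^sub>R ln (p x))"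
    unfolding Q by (rule integrable_density[OF mpl mp]) (simp add: nn)
  then show "integrable P (\<lambda>x. p x * ln (p x))" using iL by simp
  have "(\<integral>x. ln (p x) \<partial>Q) = (\<integral>x. p x *\<^sub>R ln (p x) \<partial>P)"
    unfolding Q by (rule integral_density[OF mpl mp]) (simp add: nn)
  then show "(\<integral>x. ln (p x) \<partial>Q) = (\<integral>x. p x * ln (p x) \<partial>P)" by simp
  have "integrable Q (\<lambda>x. 1::real) \<longleftrightarrow> integrable P (\<lambda>x. p x *\<^sub>R (1::real))"
    unfolding Q by (rule integrable_density) (auto simp: nn mp)
  then show "integrable P p" by simp
  have "(\<integral>x. (1::real) \<partial>Q) = (\<integral>x. p x *\<^sub>R (1::real) \<partial>P)"
    unfolding Q by (rule integral_density) (auto simp: nn mp)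
  then have "(\<integral>x. p x \<partial>P) = (\<integral>x. (1::real) \<partial>Q)" by simp
  also have "\<dots> = 1" by (simp add: Q.prob_space)
  finally show "integral\<^sup>L P p = 1" .
qed

lemma setup_b:
  fixes \<mu> :: "'a::topological_space measure" and \<nu> :: "'b::topological_space measure"
    and c :: "'a \<times> 'b \<Rightarrow> real" and F0 F1 :: "'a \<Rightarrow> real" and G0 G1 :: "'b \<Rightarrow> real"
  assumes sm[measurable_cong]: "sets \<mu> = sets borel" and sn[measurable_cong]: "sets \<nu> = sets borel"
    and [measurable]: "c \<in> borel_measurable (borel \<Otimes>\<^sub>M borel)"
      "F0 \<in> borel_measurable borel" "F1 \<in> borel_measurable borel"
      "G0 \<in> borel_measurable borel" "G1 \<in> borel_measurable borel"
    and p0: "\<pi>0 = density (\<mu> \<Otimes>\<^sub>M \<nu>) (\<lambda>(x,y). ennreal (exp (F0 x + G0 y - c (x,y))))"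
    and p1: "\<pi>1 = density (\<mu> \<Otimes>\<^sub>M \<nu>) (\<lambda>(x,y). ennreal (exp (F1 x + G1 y - c (x,y))))"
  shows "\<pi>1 = density \<pi>0 (\<lambda>z. ennreal (exp ((F1 (fst z) - F0 (fst z)) + (G1 (snd z) - G0 (snd z)))))"
proof -
  have "density \<pi>0 (\<lambda>z. ennreal (exp ((F1 (fst z) - F0 (fst z)) + (G1 (snd z) - G0 (snd z))))) =
      density (\<mu> \<Otimes>\<^sub>M \<nu>) (\<lambda>z. (case z of (x,y) \<Rightarrow> ennreal (exp (F0 x + G0 y - c (x,y)))) *
         ennreal (exp ((F1 (fst z) - F0 (fst z)) + (G1 (snd z) - G0 (snd z)))))"
    unfolding p0 by (rule density_density_eq) auto
  also have "\<dots> = \<pi>1" unfolding p1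
  proof (rule density_cong)
    show "AE z in \<mu> \<Otimes>\<^sub>M \<nu>. (case z of (x,y) \<Rightarrow> ennreal (exp (F0 x + G0 y - c (x,y)))) *
         ennreal (exp ((F1 (fst z) - F0 (fst z)) + (G1 (snd z) - G0 (snd z)))) =
         (case z of (x,y) \<Rightarrow> ennreal (exp (F1 x + G1 y - c (x,y))))"
    proof (intro AE_I2)
      fix z :: "'a \<times> 'b"
      obtain x y where z: "z = (x,y)" by (cases z)
      have "ennreal (exp (F0 x + G0 y - c (x,y))) * ennreal (exp ((F1 x - F0 x) + (G1 y - G0 y)))
          = ennreal (exp (F0 x + G0 y - c (x,y)) * exp ((F1 x - F0 x) + (G1 y - G0 y)))"
        by (rule ennreal_mult[symmetric]) auto
      also have "exp (F0 x + G0 y - c (x,y)) * exp ((F1 x - F0 x) + (G1 y - G0 y)) = exp (F1 x + G1 y - c (x,y))"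
        by (simp add: exp_add[symmetric])
      finally show "(case z of (x,y) \<Rightarrow> ennreal (exp (F0 x + G0 y - c (x,y)))) *
         ennreal (exp ((F1 (fst z) - F0 (fst z)) + (G1 (snd z) - G0 (snd z)))) =
         (case z of (x,y) \<Rightarrow> ennreal (exp (F1 x + G1 y - c (x,y))))" by (simp add: z)
    qed
  qed auto
  finally show ?thesis ..
qed

lemma setup_a:
  fixes \<mu>0 \<mu>1 :: "'a::topological_space measure" and \<nu>0 \<nu>1 :: "'b::topological_space measure"
    and c :: "'a \<times> 'b \<Rightarrow> real" and F0 F1 p :: "'a \<Rightarrow> real" and G0 G1 q :: "'b \<Rightarrow> real"
  assumes sm[measurable_cong]: "sets \<mu>0 = sets borel" and sn[measurable_cong]: "sets \<nu>0 = sets borel"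
    and n0: "prob_space \<nu>0" and n1: "prob_space \<nu>1"
    and [measurable]: "c \<in> borel_measurable (borel \<Otimes>\<^sub>M borel)"
      "F0 \<in> borel_measurable borel" "F1 \<in> borel_measurable borel"
      "G0 \<in> borel_measurable borel" "G1 \<in> borel_measurable borel"
      "p \<in> borel_measurable \<mu>0" "q \<in> borel_measurable \<nu>0"
    and pnn: "\<And>x. 0 \<le> p x" and qnn: "\<And>y. 0 \<le> q y"
    and m1: "\<mu>1 = density \<mu>0 (\<lambda>x. ennreal (p x))" and v1: "\<nu>1 = density \<nu>0 (\<lambda>y. ennreal (q y))"
    and p0: "\<pi>0 = density (\<mu>0 \<Otimes>\<^sub>M \<nu>0) (\<lambda>(x,y). ennreal (exp (F0 x + G0 y - c (x,y))))"
    and p1: "\<pi>1 = density (\<mu>1 \<Otimes>\<^sub>M \<nu>1) (\<lambda>(x,y). ennreal (exp (F1 x + G1 y - c (x,y))))"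
  shows "\<pi>1 = density \<pi>0 (\<lambda>z. ennreal (p (fst z) * q (snd z) *
            exp ((F1 (fst z) - F0 (fst z)) + (G1 (snd z) - G0 (snd z)))))"
proof -
  have mp[measurable]: "p \<in> borel_measurable borel" using measurable_cong_sets[OF sm refl] by auto
  have mq[measurable]: "q \<in> borel_measurable borel" using measurable_cong_sets[OF sn refl] by auto
  interpret n0: prob_space \<nu>0 by fact
  interpret n1: prob_space \<nu>1 by fact
  have prod: "\<mu>1 \<Otimes>\<^sub>M \<nu>1 = density (\<mu>0 \<Otimes>\<^sub>M \<nu>0) (\<lambda>(x,y). ennreal (p x) * ennreal (q y))"
    unfolding m1 v1
    by (rule pair_measure_density) (auto simp: n0.sigma_finite_measure_axioms n1.sigma_finite_measure_axioms v1[symmetric])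
  have "\<pi>1 = density (\<mu>0 \<Otimes>\<^sub>M \<nu>0) (\<lambda>z. (case z of (x,y) \<Rightarrow> ennreal (p x) * ennreal (q y)) *
            (case z of (x,y) \<Rightarrow> ennreal (exp (F1 x + G1 y - c (x,y)))))"
    unfolding p1 prod by (rule density_density_eq) auto
  also have "\<dots> = density (\<mu>0 \<Otimes>\<^sub>M \<nu>0) (\<lambda>z. (case z of (x,y) \<Rightarrow> ennreal (exp (F0 x + G0 y - c (x,y)))) *
         ennreal (p (fst z) * q (snd z) * exp ((F1 (fst z) - F0 (fst z)) + (G1 (snd z) - G0 (snd z)))))"
  proof (rule density_cong)
    show "AE z in \<mu>0 \<Otimes>\<^sub>M \<nu>0. (case z of (x,y) \<Rightarrow> ennreal (p x) * ennreal (q y)) *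
            (case z of (x,y) \<Rightarrow> ennreal (exp (F1 x + G1 y - c (x,y)))) =
         (case z of (x,y) \<Rightarrow> ennreal (exp (F0 x + G0 y - c (x,y)))) *
         ennreal (p (fst z) * q (snd z) * exp ((F1 (fst z) - F0 (fst z)) + (G1 (snd z) - G0 (snd z))))"
    proof (intro AE_I2)
      fix z :: "'a \<times> 'b"
      obtain x y where z: "z = (x,y)" by (cases z)
      have e: "p x * q y * exp (F1 x + G1 y - c (x,y)) =
          exp (F0 x + G0 y - c (x,y)) * (p x * q y * exp ((F1 x - F0 x) + (G1 y - G0 y)))"
        by (simp add: exp_add[symmetric] ac_simps)
      have "ennreal (p x) * ennreal (q y) * ennreal (exp (F1 x + G1 y - c (x,y))) =
          ennreal (p x * q y * exp (F1 x + G1 y - c (x,y)))"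
        using pnn[of x] qnn[of y] by (simp add: ennreal_mult)
      also have "\<dots> = ennreal (exp (F0 x + G0 y - c (x,y))) * ennreal (p x * q y * exp ((F1 x - F0 x) + (G1 y - G0 y)))"
        unfolding e using pnn[of x] qnn[of y] by (simp add: ennreal_mult)
      finally show "(case z of (x,y) \<Rightarrow> ennreal (p x) * ennreal (q y)) *
            (case z of (x,y) \<Rightarrow> ennreal (exp (F1 x + G1 y - c (x,y)))) =
         (case z of (x,y) \<Rightarrow> ennreal (exp (F0 x + G0 y - c (x,y)))) *
         ennreal (p (fst z) * q (snd z) * exp ((F1 (fst z) - F0 (fst z)) + (G1 (snd z) - G0 (snd z))))"
        by (simp add: z)
    qed
  qed auto
  also have "\<dots> = density \<pi>0 (\<lambda>z. ennreal (p (fst z) * q (snd z) *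
            exp ((F1 (fst z) - F0 (fst z)) + (G1 (snd z) - G0 (snd z)))))"
    unfolding p0 by (rule density_density_eq[symmetric]) auto
  finally show ?thesis .
qed

lemma couplingsD:
  assumes "\<pi> \<in> couplings \<mu> \<nu>"
  shows "prob_space \<pi>" "sets \<pi> = sets (borel \<Otimes>\<^sub>M borel)" "distr \<pi> borel fst = \<mu>" "distr \<pi> borel snd = \<nu>"
  using assms unfolding couplings_def by auto

lemma dir_b:
  fixes \<mu> \<mu>1 :: "'a::topological_space measure" and \<nu> \<nu>1 :: "'b::topological_space measure"
    and c :: "'a \<times> 'b \<Rightarrow> real" and F0 F1 :: "'a \<Rightarrow> real" and G0 G1 :: "'b \<Rightarrow> real"
  assumes sm[measurable_cong]: "sets \<mu> = sets borel" and sn[measurable_cong]: "sets \<nu> = sets borel"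
    and [measurable]: "c \<in> borel_measurable (borel \<Otimes>\<^sub>M borel)"
      "F0 \<in> borel_measurable borel" "F1 \<in> borel_measurable borel"
      "G0 \<in> borel_measurable borel" "G1 \<in> borel_measurable borel"
    and pi0: "prob_space \<pi>0" and pi1: "\<pi>1 \<in> couplings \<mu>1 \<nu>1"
    and p0: "\<pi>0 = density (\<mu> \<Otimes>\<^sub>M \<nu>) (\<lambda>(x,y). ennreal (exp (F0 x + G0 y - c (x,y))))"
    and p1: "\<pi>1 = density (\<mu> \<Otimes>\<^sub>M \<nu>) (\<lambda>(x,y). ennreal (exp (F1 x + G1 y - c (x,y))))"
    and iF: "integrable \<mu>1 (\<lambda>x. F1 x - F0 x)"
  shows "integrable \<nu>1 (\<lambda>y. G1 y - G0 y) \<Longrightarrow>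
      rel_entropy \<pi>1 \<pi>0 = ereal ((\<integral>x. F1 x - F0 x \<partial>\<mu>1) + (\<integral>y. G1 y - G0 y \<partial>\<nu>1))"
    and "(\<integral>\<^sup>+y. ennreal (- (G1 y - G0 y)) \<partial>\<nu>1) < \<infinity>"
proof -
  have C0: "prob_space \<pi>0" "sets \<pi>0 = sets (borel \<Otimes>\<^sub>M borel)"
    using pi0 p0 sm sn by (auto intro!: sets_pair_measure_cong)
  note C1 = couplingsD[OF pi1]
  define R where "R z = exp ((F1 (fst z) - F0 (fst z)) + (G1 (snd z) - G0 (snd z)))" for z
  have Q: "\<pi>1 = density \<pi>0 (\<lambda>z. ennreal (R z))" unfolding R_def by (rule setup_b[OF sm sn _ _ _ _ _ p0 p1]) auto
  have mR: "R \<in> borel_measurable \<pi>0" unfolding measurable_cong_sets[OF C0(2) refl] R_def by measurable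
  have nn: "\<And>z. 0 \<le> R z" unfolding R_def by simp
  have ae: "AE z in \<pi>1. ln (R z) = (F1 (fst z) - F0 (fst z)) + (G1 (snd z) - G0 (snd z))"
    by (intro AE_I2) (simp add: R_def)
  show "rel_entropy \<pi>1 \<pi>0 = ereal ((\<integral>x. F1 x - F0 x \<partial>\<mu>1) + (\<integral>y. G1 y - G0 y \<partial>\<nu>1))"
    if iG: "integrable \<nu>1 (\<lambda>y. G1 y - G0 y)"
    by (rule core_dir[OF C0(1) C1(1) C0(2) mR nn Q C1(3) C1(4) _ _ iF iG ae]) auto
  show "(\<integral>\<^sup>+y. ennreal (- (G1 y - G0 y)) \<partial>\<nu>1) < \<infinity>"
    by (rule negpart_dir[OF C0(1) C1(1) C0(2) mR nn Q C1(3) C1(4) _ _ iF ae]) auto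
qed

lemma dir_a:
  fixes \<mu>0 \<mu>1 :: "'a::topological_space measure" and \<nu>0 \<nu>1 :: "'b::topological_space measure"
    and c :: "'a \<times> 'b \<Rightarrow> real" and F0 F1 :: "'a \<Rightarrow> real" and G0 G1 :: "'b \<Rightarrow> real"
  assumes m0: "borel_prob \<mu>0" and m1: "borel_prob \<mu>1" and n0: "borel_prob \<nu>0" and n1: "borel_prob \<nu>1"
    and Hm: "rel_entropy \<mu>1 \<mu>0 < \<infinity>" and Hn: "rel_entropy \<nu>1 \<nu>0 < \<infinity>"
    and [measurable]: "c \<in> borel_measurable (borel \<Otimes>\<^sub>M borel)"
      "F0 \<in> borel_measurable borel" "F1 \<in> borel_measurable borel"
      "G0 \<in> borel_measurable borel" "G1 \<in> borel_measurable borel"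
    and pi0: "\<pi>0 \<in> couplings \<mu>0 \<nu>0" and pi1: "\<pi>1 \<in> couplings \<mu>1 \<nu>1"
    and p0: "\<pi>0 = density (\<mu>0 \<Otimes>\<^sub>M \<nu>0) (\<lambda>(x,y). ennreal (exp (F0 x + G0 y - c (x,y))))"
    and p1: "\<pi>1 = density (\<mu>1 \<Otimes>\<^sub>M \<nu>1) (\<lambda>(x,y). ennreal (exp (F1 x + G1 y - c (x,y))))"
    and iF: "integrable \<mu>1 (\<lambda>x. F1 x - F0 x)"
  shows "integrable \<nu>1 (\<lambda>y. G1 y - G0 y) \<Longrightarrow>
      rel_entropy \<pi>1 \<pi>0 = rel_entropy \<mu>1 \<mu>0 + rel_entropy \<nu>1 \<nu>0 +
        ereal ((\<integral>x. F1 x - F0 x \<partial>\<mu>1) + (\<integral>y. G1 y - G0 y \<partial>\<nu>1))"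
    and "(\<integral>\<^sup>+y. ennreal (- (ln (enn2real (RN_deriv \<nu>0 \<nu>1 y)) + (G1 y - G0 y))) \<partial>\<nu>1) < \<infinity>"
proof -
  have sm[measurable_cong]: "sets \<mu>0 = sets borel" and sn[measurable_cong]: "sets \<nu>0 = sets borel"
    and pm0: "prob_space \<mu>0" and pm1: "prob_space \<mu>1" and pn0: "prob_space \<nu>0" and pn1: "prob_space \<nu>1"
    using m0 m1 n0 n1 unfolding borel_prob_def by auto
  define p where "p x = enn2real (RN_deriv \<mu>0 \<mu>1 x)" for x
  define q where "q y = enn2real (RN_deriv \<nu>0 \<nu>1 y)" for y
  note Fp0 = RE_facts[OF pm0 pm1 Hm]
  note Fq0 = RE_facts[OF pn0 pn1 Hn]
  have Fp1: "\<mu>1 = density \<mu>0 (\<lambda>x. ennreal (p x))" unfolding p_def by (rule Fp0(1))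
  have Fp2: "p \<in> borel_measurable \<mu>0" unfolding p_def by simp
  have Fp3: "\<And>x. 0 \<le> p x" unfolding p_def by simp
  have Fp7: "integrable \<mu>1 (\<lambda>x. ln (p x))" unfolding p_def by (rule Fp0(7))
  have Fp8: "rel_entropy \<mu>1 \<mu>0 = ereal (\<integral>x. ln (p x) \<partial>\<mu>1)" unfolding p_def by (rule Fp0(8))
  have Fq1: "\<nu>1 = density \<nu>0 (\<lambda>x. ennreal (q x))" unfolding q_def by (rule Fq0(1))
  have Fq2: "q \<in> borel_measurable \<nu>0" unfolding q_def by simp
  have Fq3: "\<And>x. 0 \<le> q x" unfolding q_def by simp
  have Fq7: "integrable \<nu>1 (\<lambda>x. ln (q x))" unfolding q_def by (rule Fq0(7))
  have Fq8: "rel_entropy \<nu>1 \<nu>0 = ereal (\<integral>x. ln (q x) \<partial>\<nu>1)" unfolding q_def by (rule Fq0(8))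
  have mp[measurable]: "p \<in> borel_measurable borel" using Fp2 unfolding measurable_cong_sets[OF sm refl] .
  have mq[measurable]: "q \<in> borel_measurable borel" using Fq2 unfolding measurable_cong_sets[OF sn refl] .
  note C0 = couplingsD[OF pi0] and C1 = couplingsD[OF pi1]
  define R where "R z = p (fst z) * q (snd z) * exp ((F1 (fst z) - F0 (fst z)) + (G1 (snd z) - G0 (snd z)))" for z
  have Q: "\<pi>1 = density \<pi>0 (\<lambda>z. ennreal (R z))" unfolding R_def
    by (rule setup_a[OF sm sn pn0 pn1 _ _ _ _ _ Fp2 Fq2 Fp3 Fq3 Fp1 Fq1 p0 p1]) auto
  have mR: "R \<in> borel_measurable \<pi>0" unfolding measurable_cong_sets[OF C0(2) refl] R_def by measurable
  have nn: "\<And>z. 0 \<le> R z" unfolding R_def using Fp3 Fq3 by simp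
  have mfst: "fst \<in> measurable \<pi>1 borel" and msnd: "snd \<in> measurable \<pi>1 borel"
    unfolding measurable_cong_sets[OF C1(2) refl] by auto
  have aep: "AE x in \<mu>1. 0 < p x"
    unfolding Fp1 by (subst AE_density) (auto simp: Fp2)
  have aeq: "AE y in \<nu>1. 0 < q y"
    unfolding Fq1 by (subst AE_density) (auto simp: Fq2)
  have aep': "AE z in \<pi>1. 0 < p (fst z)"
    using aep unfolding C1(3)[symmetric] by (subst (asm) AE_distr_iff[OF mfst]) auto
  have aeq': "AE z in \<pi>1. 0 < q (snd z)"
    using aeq unfolding C1(4)[symmetric] by (subst (asm) AE_distr_iff[OF msnd]) auto
  have ae: "AE z in \<pi>1. ln (R z) = (ln (p (fst z)) + (F1 (fst z) - F0 (fst z))) + (ln (q (snd z)) + (G1 (snd z) - G0 (snd z)))"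
    using aep' aeq'
  proof eventually_elim
    case (elim z)
    then show ?case unfolding R_def by (simp add: ln_mult)
  qed
  have iA: "integrable \<mu>1 (\<lambda>x. ln (p x) + (F1 x - F0 x))" using Fp7 iF by simp
  show "rel_entropy \<pi>1 \<pi>0 = rel_entropy \<mu>1 \<mu>0 + rel_entropy \<nu>1 \<nu>0 +
        ereal ((\<integral>x. F1 x - F0 x \<partial>\<mu>1) + (\<integral>y. G1 y - G0 y \<partial>\<nu>1))"
    if iG: "integrable \<nu>1 (\<lambda>y. G1 y - G0 y)"
  proof -
    have iB: "integrable \<nu>1 (\<lambda>y. ln (q y) + (G1 y - G0 y))" using Fq7 iG by simp
    have "rel_entropy \<pi>1 \<pi>0 = ereal ((\<integral>x. ln (p x) + (F1 x - F0 x) \<partial>\<mu>1) + (\<integral>y. ln (q y) + (G1 y - G0 y) \<partial>\<nu>1))"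
      by (rule core_dir[OF C0(1) C1(1) C0(2) mR nn Q C1(3) C1(4) _ _ iA iB ae]) auto
    also have "(\<integral>x. ln (p x) + (F1 x - F0 x) \<partial>\<mu>1) = (\<integral>x. ln (p x) \<partial>\<mu>1) + (\<integral>x. F1 x - F0 x \<partial>\<mu>1)"
      using Fp7 iF by (rule Bochner_Integration.integral_add)
    also have "(\<integral>y. ln (q y) + (G1 y - G0 y) \<partial>\<nu>1) = (\<integral>y. ln (q y) \<partial>\<nu>1) + (\<integral>y. G1 y - G0 y \<partial>\<nu>1)"
      using Fq7 iG by (rule Bochner_Integration.integral_add)
    finally show ?thesis unfolding Fp8 Fq8 by simp
  qed
  show "(\<integral>\<^sup>+y. ennreal (- (ln (enn2real (RN_deriv \<nu>0 \<nu>1 y)) + (G1 y - G0 y))) \<partial>\<nu>1) < \<infinity>"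
    using negpart_dir[OF C0(1) C1(1) C0(2) mR nn Q C1(3) C1(4) _ _ iA ae] unfolding q_def by auto
qed

lemma mu_part:
  fixes \<mu> \<mu>' :: "'a::topological_space measure" and f f' :: "'a \<Rightarrow> real"
  assumes mu: "borel_prob \<mu>" and mu': "borel_prob \<mu>'" and Hmu: "rel_entropy \<mu>' \<mu> < \<infinity>"
    and [measurable]: "f \<in> borel_measurable borel" "f' \<in> borel_measurable borel"
    and C1: "tail_const \<mu> (\<lambda>x. f' x - f x) < \<infinity>"
  shows "\<exists>H c. rel_entropy \<mu>' \<mu> = ereal H \<and> 0 \<le> H \<and> tail_const \<mu> (\<lambda>x. f' x - f x) = ereal c \<and> 0 \<le> c \<and>
     integrable \<mu> (\<lambda>x. f' x - f x) \<and> integrable \<mu>' (\<lambda>x. f' x - f x) \<and>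
     (\<integral>x. f' x - f x \<partial>\<mu>') - (\<integral>x. f' x - f x \<partial>\<mu>) \<le> c * (sqrt H + H / 2)"
proof -
  have sm[measurable_cong]: "sets \<mu> = sets borel" and pm: "prob_space \<mu>" and pm': "prob_space \<mu>'"
    using mu mu' unfolding borel_prob_def by auto
  interpret pm: prob_space \<mu> by fact
  define p where "p x = enn2real (RN_deriv \<mu> \<mu>' x)" for x
  note F0 = RE_facts[OF pm pm' Hmu]
  have F1: "\<mu>' = density \<mu> (\<lambda>x. ennreal (p x))" unfolding p_def by (rule F0(1))
  have F2: "p \<in> borel_measurable \<mu>" unfolding p_def by simp
  have F3: "\<And>x. 0 \<le> p x" unfolding p_def by simp
  have F4: "integrable \<mu> p" unfolding p_def by (rule F0(4))
  have F5: "integral\<^sup>L \<mu> p = 1" unfolding p_def by (rule F0(5))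
  have F6: "integrable \<mu> (\<lambda>x. p x * ln (p x))" unfolding p_def by (rule F0(6))
  have F8: "rel_entropy \<mu>' \<mu> = ereal (\<integral>x. ln (p x) \<partial>\<mu>')" unfolding p_def by (rule F0(8))
  have F9: "(\<integral>x. ln (p x) \<partial>\<mu>') = (\<integral>x. p x * ln (p x) \<partial>\<mu>)" unfolding p_def by (rule F0(9))
  define H where "H = (\<integral>x. p x * ln (p x) \<partial>\<mu>)"
  have H0: "0 \<le> H" unfolding H_def by (rule pm.entropy_nonneg[OF F2 F3 F4 F5 F6])
  have mh: "(\<lambda>x. f' x - f x) \<in> borel_measurable \<mu>" by measurable
  note T = TC[OF pm mh F2 F3 F4 F5 F6 C1]
  obtain c where c: "tail_const \<mu> (\<lambda>x. f' x - f x) = ereal c" "0 \<le> c"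
     "(\<integral>x. (f' x - f x) * p x \<partial>\<mu>) - (\<integral>x. f' x - f x \<partial>\<mu>) \<le> c * (sqrt H + H / 2)"
    using T(3) unfolding H_def by blast
  have i': "integrable \<mu>' (\<lambda>x. f' x - f x)"
  proof -
    have "integrable \<mu>' (\<lambda>x. f' x - f x) \<longleftrightarrow> integrable \<mu> (\<lambda>x. p x *\<^sub>R (f' x - f x))"
      unfolding F1 by (rule integrable_density[OF mh F2]) (simp add: F3)
    then show ?thesis using T(2) by (simp add: mult.commute)
  qed
  have e': "(\<integral>x. f' x - f x \<partial>\<mu>') = (\<integral>x. (f' x - f x) * p x \<partial>\<mu>)"
  proof -
    have "(\<integral>x. f' x - f x \<partial>\<mu>') = (\<integral>x. p x *\<^sub>R (f' x - f x) \<partial>\<mu>)"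
      unfolding F1 by (rule integral_density[OF mh F2]) (simp add: F3)
    then show ?thesis by (simp add: mult.commute)
  qed
  show ?thesis
    by (rule exI[of _ H], rule exI[of _ c]) (use F8 F9 H_def H0 c T(1) i' e' in auto)
qed

lemma int_from_nn:
  fixes \<nu> :: "'b measure" and h :: "'b \<Rightarrow> real"
  assumes [measurable]: "h \<in> borel_measurable \<nu>"
    and a: "(\<integral>\<^sup>+y. ennreal (- h y) \<partial>\<nu>) < \<infinity>" and b: "(\<integral>\<^sup>+y. ennreal (h y) \<partial>\<nu>) < \<infinity>"
  shows "integrable \<nu> h"
  unfolding real_integrable_def using a b by (auto simp: less_top)

lemma RN_self_ae:
  assumes "prob_space \<nu>"
  shows "AE y in \<nu>. ln (enn2real (RN_deriv \<nu> \<nu> y)) = 0"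
proof -
  interpret prob_space \<nu> by fact
  have "AE y in \<nu>. 1 = RN_deriv \<nu> \<nu> y" by (rule RN_deriv_unique) (auto simp: density_1)
  then show ?thesis by eventually_elim (metis enn2real_1 ln_one)
qed

lemma nu_struct_b:
  fixes \<mu> \<mu>' :: "'a::topological_space measure" and \<nu> :: "'b::topological_space measure"
    and c :: "'a \<times> 'b \<Rightarrow> real" and f f' :: "'a \<Rightarrow> real" and g g' :: "'b \<Rightarrow> real"
  assumes mu: "borel_prob \<mu>" and nu: "borel_prob \<nu>"
    and [measurable]: "c \<in> borel_measurable (borel \<Otimes>\<^sub>M borel)"
      "f \<in> borel_measurable borel" "f' \<in> borel_measurable borel"
      "g \<in> borel_measurable borel" "g' \<in> borel_measurable borel"
    and pi: "\<pi> \<in> couplings \<mu> \<nu>" and pi': "\<pi>' \<in> couplings \<mu>' \<nu>"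
    and pd: "\<pi> = density (\<mu> \<Otimes>\<^sub>M \<nu>) (\<lambda>(x,y). ennreal (exp (f x + g y - c (x,y))))"
    and pd': "\<pi>' = density (\<mu> \<Otimes>\<^sub>M \<nu>) (\<lambda>(x,y). ennreal (exp (f' x + g' y - c (x,y))))"
    and i1: "integrable \<mu> (\<lambda>x. f' x - f x)" and i1': "integrable \<mu>' (\<lambda>x. f' x - f x)"
  shows "integrable \<nu> (\<lambda>y. g' y - g y)"
proof -
  have sm: "sets \<mu> = sets borel" and sn[measurable_cong]: "sets \<nu> = sets borel"
    using mu nu unfolding borel_prob_def by auto
  have a: "(\<integral>\<^sup>+y. ennreal (- (g' y - g y)) \<partial>\<nu>) < \<infinity>"
    by (rule dir_b(2)[OF sm sn _ _ _ _ _ couplingsD(1)[OF pi] pi' pd pd' i1']) auto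
  have i2: "integrable \<mu> (\<lambda>x. f x - f' x)" using Bochner_Integration.integrable_minus[OF i1] by simp
  have b: "(\<integral>\<^sup>+y. ennreal (- (g y - g' y)) \<partial>\<nu>) < \<infinity>"
    by (rule dir_b(2)[OF sm sn _ _ _ _ _ couplingsD(1)[OF pi'] pi pd' pd i2]) auto
  show ?thesis by (rule int_from_nn) (use a b in auto)
qed

lemma nu_struct_a:
  fixes \<mu> \<mu>' :: "'a::topological_space measure" and \<nu> :: "'b::topological_space measure"
    and c :: "'a \<times> 'b \<Rightarrow> real" and f f' :: "'a \<Rightarrow> real" and g g' :: "'b \<Rightarrow> real"
  assumes mu: "borel_prob \<mu>" and mu': "borel_prob \<mu>'" and nu: "borel_prob \<nu>"
    and Hm: "rel_entropy \<mu>' \<mu> < \<infinity>" and Hm': "rel_entropy \<mu> \<mu>' < \<infinity>"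
    and [measurable]: "c \<in> borel_measurable (borel \<Otimes>\<^sub>M borel)"
      "f \<in> borel_measurable borel" "f' \<in> borel_measurable borel"
      "g \<in> borel_measurable borel" "g' \<in> borel_measurable borel"
    and pi: "\<pi> \<in> couplings \<mu> \<nu>" and pi': "\<pi>' \<in> couplings \<mu>' \<nu>"
    and pd: "\<pi> = density (\<mu> \<Otimes>\<^sub>M \<nu>) (\<lambda>(x,y). ennreal (exp (f x + g y - c (x,y))))"
    and pd': "\<pi>' = density (\<mu>' \<Otimes>\<^sub>M \<nu>) (\<lambda>(x,y). ennreal (exp (f' x + g' y - c (x,y))))"
    and i1: "integrable \<mu> (\<lambda>x. f' x - f x)" and i1': "integrable \<mu>' (\<lambda>x. f' x - f x)"
  shows "integrable \<nu> (\<lambda>y. g' y - g y)"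
proof -
  have sn[measurable_cong]: "sets \<nu> = sets borel" and pn: "prob_space \<nu>"
    using nu unfolding borel_prob_def by auto
  have Hn: "rel_entropy \<nu> \<nu> < \<infinity>" using RE_self[OF pn] by simp
  have ae: "AE y in \<nu>. ln (enn2real (RN_deriv \<nu> \<nu> y)) = 0" by (rule RN_self_ae[OF pn])
  have a0: "(\<integral>\<^sup>+y. ennreal (- (ln (enn2real (RN_deriv \<nu> \<nu> y)) + (g' y - g y))) \<partial>\<nu>) < \<infinity>"
    by (rule dir_a(2)[OF mu mu' nu nu Hm Hn _ _ _ _ _ pi pi' pd pd' i1']) auto
  have a: "(\<integral>\<^sup>+y. ennreal (- (g' y - g y)) \<partial>\<nu>) < \<infinity>"
  proof -
    have "(\<integral>\<^sup>+y. ennreal (- (g' y - g y)) \<partial>\<nu>) = (\<integral>\<^sup>+y. ennreal (- (ln (enn2real (RN_deriv \<nu> \<nu> y)) + (g' y - g y))) \<partial>\<nu>)"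
      using ae by (intro nn_integral_cong_AE) auto
    then show ?thesis using a0 by simp
  qed
  have i2: "integrable \<mu> (\<lambda>x. f x - f' x)" using Bochner_Integration.integrable_minus[OF i1] by simp
  have b0: "(\<integral>\<^sup>+y. ennreal (- (ln (enn2real (RN_deriv \<nu> \<nu> y)) + (g y - g' y))) \<partial>\<nu>) < \<infinity>"
    by (rule dir_a(2)[OF mu' mu nu nu Hm' Hn _ _ _ _ _ pi' pi pd' pd i2]) auto
  have b: "(\<integral>\<^sup>+y. ennreal (- (g y - g' y)) \<partial>\<nu>) < \<infinity>"
  proof -
    have "(\<integral>\<^sup>+y. ennreal (- (g y - g' y)) \<partial>\<nu>) = (\<integral>\<^sup>+y. ennreal (- (ln (enn2real (RN_deriv \<nu> \<nu> y)) + (g y - g' y))) \<partial>\<nu>)"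
      using ae by (intro nn_integral_cong_AE) auto
    then show ?thesis using b0 by simp
  qed
  show ?thesis by (rule int_from_nn) (use a b in auto)
qed

theorem lemma3p2:
  fixes \<mu> \<mu>' :: "'a::polish_space measure" and \<nu> \<nu>' :: "'b::polish_space measure"
    and c :: "'a \<times> 'b \<Rightarrow> real"
    and f f' :: "'a \<Rightarrow> real" and g g' :: "'b \<Rightarrow> real"
    and \<pi> \<pi>' :: "('a \<times> 'b) measure"
  assumes c_meas: "c \<in> borel_measurable ((borel :: 'a measure) \<Otimes>\<^sub>M (borel :: 'b measure))"
    and mu: "borel_prob \<mu>" and mu': "borel_prob \<mu>'"
    and nu: "borel_prob \<nu>" and nu': "borel_prob \<nu>'"
    and Hmu: "rel_entropy \<mu>' \<mu> < \<infinity>" and Hnu: "rel_entropy \<nu>' \<nu> < \<infinity>"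
    and f_meas: "f \<in> borel_measurable borel" and f'_meas: "f' \<in> borel_measurable borel"
    and g_meas: "g \<in> borel_measurable borel" and g'_meas: "g' \<in> borel_measurable borel"
    and C1: "tail_const \<mu> (\<lambda>x. f' x - f x) < \<infinity>"
    and C2: "tail_const \<nu> (\<lambda>y. g' y - g y) < \<infinity> \<or> \<nu>' = \<nu>"
    and pi: "\<pi> \<in> couplings \<mu> \<nu>"
    and pi_dens: "\<pi> = density (\<mu> \<Otimes>\<^sub>M \<nu>) (\<lambda>(x,y). ennreal (exp (f x + g y - c (x,y))))"
  shows
   "(\<pi>' \<in> couplings \<mu>' \<nu>' \<and>
     \<pi>' = density (\<mu>' \<Otimes>\<^sub>M \<nu>') (\<lambda>(x,y). ennreal (exp (f' x + g' y - c (x,y)))) \<longrightarrow>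
       rel_entropy \<pi>' \<pi> + rel_entropy \<pi> \<pi>' \<le>
         tail_const \<mu> (\<lambda>x. f' x - f x) * ereal (sqrt (real_of_ereal (rel_entropy \<mu>' \<mu>)))
         + (1 + tail_const \<mu> (\<lambda>x. f' x - f x) / 2) * rel_entropy \<mu>' \<mu>
         + rel_entropy \<mu> \<mu>'
         + tail_const \<nu> (\<lambda>y. g' y - g y) * ereal (sqrt (real_of_ereal (rel_entropy \<nu>' \<nu>)))
         + (1 + tail_const \<nu> (\<lambda>y. g' y - g y) / 2) * rel_entropy \<nu>' \<nu>
         + rel_entropy \<nu> \<nu>')
  \<and> (\<pi>' \<in> couplings \<mu>' \<nu>' \<and>
     \<pi>' = density (\<mu> \<Otimes>\<^sub>M \<nu>) (\<lambda>(x,y). ennreal (exp (f' x + g' y - c (x,y)))) \<longrightarrow>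
       rel_entropy \<pi>' \<pi> + rel_entropy \<pi> \<pi>' \<le>
         tail_const \<mu> (\<lambda>x. f' x - f x) *
           ereal (sqrt (real_of_ereal (rel_entropy \<mu>' \<mu>)) + real_of_ereal (rel_entropy \<mu>' \<mu>) / 2)
         + tail_const \<nu> (\<lambda>y. g' y - g y) *
           ereal (sqrt (real_of_ereal (rel_entropy \<nu>' \<nu>)) + real_of_ereal (rel_entropy \<nu>' \<nu>) / 2))"
  proof -
  have sm[measurable_cong]: "sets \<mu> = sets borel" and sm': "sets \<mu>' = sets borel"
    and sn[measurable_cong]: "sets \<nu> = sets borel" and sn': "sets \<nu>' = sets borel"
    and pm: "prob_space \<mu>" and pm': "prob_space \<mu>'" and pn: "prob_space \<nu>" and pn': "prob_space \<nu>'"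
    using mu mu' nu nu' unfolding borel_prob_def by auto
  note [measurable] = c_meas f_meas f'_meas g_meas g'_meas
  obtain H1 c1 where M: "rel_entropy \<mu>' \<mu> = ereal H1" "0 \<le> H1" "tail_const \<mu> (\<lambda>x. f' x - f x) = ereal c1" "0 \<le> c1"
     "integrable \<mu> (\<lambda>x. f' x - f x)" "integrable \<mu>' (\<lambda>x. f' x - f x)"
     "(\<integral>x. f' x - f x \<partial>\<mu>') - (\<integral>x. f' x - f x \<partial>\<mu>) \<le> c1 * (sqrt H1 + H1 / 2)"
    using mu_part[OF mu mu' Hmu f_meas f'_meas C1] by blast
  have NU: "\<exists>H2 c2. rel_entropy \<nu>' \<nu> = ereal H2 \<and> 0 \<le> H2 \<and> 0 \<le> c2 \<and>
        tail_const \<nu> (\<lambda>y. g' y - g y) * ereal (sqrt H2) = ereal (c2 * sqrt H2) \<and>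
        (1 + tail_const \<nu> (\<lambda>y. g' y - g y) / 2) * ereal H2 = ereal ((1 + c2 / 2) * H2) \<and>
        tail_const \<nu> (\<lambda>y. g' y - g y) * ereal (sqrt H2 + H2 / 2) = ereal (c2 * (sqrt H2 + H2 / 2)) \<and>
        (integrable \<nu> (\<lambda>y. g' y - g y) \<and> integrable \<nu>' (\<lambda>y. g' y - g y) \<longrightarrow>
          (\<integral>y. g' y - g y \<partial>\<nu>') - (\<integral>y. g' y - g y \<partial>\<nu>) \<le> c2 * (sqrt H2 + H2 / 2)) \<and>
        (\<nu>' \<noteq> \<nu> \<longrightarrow> integrable \<nu> (\<lambda>y. g' y - g y) \<and> integrable \<nu>' (\<lambda>y. g' y - g y))"
  proof (cases "\<nu>' = \<nu>")
    case True
    show ?thesis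
      by (rule exI[of _ 0], rule exI[of _ 0]) (use True RE_self[OF pn] in \<open>auto simp: zero_ereal_def[symmetric]\<close>)
  next
    case False
    then have C2': "tail_const \<nu> (\<lambda>y. g' y - g y) < \<infinity>" using C2 by auto
    obtain H2 c2 where N: "rel_entropy \<nu>' \<nu> = ereal H2" "0 \<le> H2" "tail_const \<nu> (\<lambda>y. g' y - g y) = ereal c2" "0 \<le> c2"
     "integrable \<nu> (\<lambda>y. g' y - g y)" "integrable \<nu>' (\<lambda>y. g' y - g y)"
     "(\<integral>y. g' y - g y \<partial>\<nu>') - (\<integral>y. g' y - g y \<partial>\<nu>) \<le> c2 * (sqrt H2 + H2 / 2)"
      using mu_part[OF nu nu' Hnu g_meas g'_meas C2'] by blast
    show ?thesis
      by (rule exI[of _ H2], rule exI[of _ c2]) (use N in auto)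
  qed
  then obtain H2 c2 where N: "rel_entropy \<nu>' \<nu> = ereal H2" "0 \<le> H2" "0 \<le> c2"
        "tail_const \<nu> (\<lambda>y. g' y - g y) * ereal (sqrt H2) = ereal (c2 * sqrt H2)"
        "(1 + tail_const \<nu> (\<lambda>y. g' y - g y) / 2) * ereal H2 = ereal ((1 + c2 / 2) * H2)"
        "tail_const \<nu> (\<lambda>y. g' y - g y) * ereal (sqrt H2 + H2 / 2) = ereal (c2 * (sqrt H2 + H2 / 2))"
        "integrable \<nu> (\<lambda>y. g' y - g y) \<Longrightarrow> integrable \<nu>' (\<lambda>y. g' y - g y) \<Longrightarrow>
          (\<integral>y. g' y - g y \<partial>\<nu>') - (\<integral>y. g' y - g y \<partial>\<nu>) \<le> c2 * (sqrt H2 + H2 / 2)"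
        "\<nu>' \<noteq> \<nu> \<Longrightarrow> integrable \<nu> (\<lambda>y. g' y - g y)"
        "\<nu>' \<noteq> \<nu> \<Longrightarrow> integrable \<nu>' (\<lambda>y. g' y - g y)"
    by blast
  have iMm: "integrable \<mu> (\<lambda>x. f x - f' x)" using Bochner_Integration.integrable_minus[OF M(5)] by simp
  have eMm: "(\<integral>x. f x - f' x \<partial>\<mu>) = - (\<integral>x. f' x - f x \<partial>\<mu>)"
  proof -
    have "(\<integral>x. f x - f' x \<partial>\<mu>) = (\<integral>x. - (f' x - f x) \<partial>\<mu>)"
      by (rule Bochner_Integration.integral_cong) auto
    also have "\<dots> = - (\<integral>x. f' x - f x \<partial>\<mu>)" by (rule Bochner_Integration.integral_minus)
    finally show ?thesis .
  qed
  have eNm: "(\<integral>y. g y - g' y \<partial>\<nu>) = - (\<integral>y. g' y - g y \<partial>\<nu>)"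
  proof -
    have "(\<integral>y. g y - g' y \<partial>\<nu>) = (\<integral>y. - (g' y - g y) \<partial>\<nu>)"
      by (rule Bochner_Integration.integral_cong) auto
    also have "\<dots> = - (\<integral>y. g' y - g y \<partial>\<nu>)" by (rule Bochner_Integration.integral_minus)
    finally show ?thesis .
  qed
  show ?thesis
  proof (intro conjI impI)
    assume A: "\<pi>' \<in> couplings \<mu>' \<nu>' \<and>
     \<pi>' = density (\<mu>' \<Otimes>\<^sub>M \<nu>') (\<lambda>(x,y). ennreal (exp (f' x + g' y - c (x,y))))"
    note pi'A = conjunct1[OF A] and pdA = conjunct2[OF A]
    have neM: "rel_entropy \<mu> \<mu>' \<noteq> -\<infinity>" by (rule RE_ne_minf[OF pm' pm])
    have neN: "rel_entropy \<nu> \<nu>' \<noteq> -\<infinity>" by (rule RE_ne_minf[OF pn' pn])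
    have r1: "tail_const \<mu> (\<lambda>x. f' x - f x) * ereal (sqrt (real_of_ereal (rel_entropy \<mu>' \<mu>))) = ereal (c1 * sqrt H1)"
      unfolding M(1) M(3) by simp
    have r2: "(1 + tail_const \<mu> (\<lambda>x. f' x - f x) / 2) * rel_entropy \<mu>' \<mu> = ereal ((1 + c1 / 2) * H1)"
      unfolding M(1) M(3) by simp
    have r3: "tail_const \<nu> (\<lambda>y. g' y - g y) * ereal (sqrt (real_of_ereal (rel_entropy \<nu>' \<nu>))) = ereal (c2 * sqrt H2)"
      unfolding N(1) real_of_ereal.simps(1) by (rule N(4))
    have r4: "(1 + tail_const \<nu> (\<lambda>y. g' y - g y) / 2) * rel_entropy \<nu>' \<nu> = ereal ((1 + c2 / 2) * H2)"
      unfolding N(1) by (rule N(5))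
    have main: "rel_entropy \<pi>' \<pi> + rel_entropy \<pi> \<pi>' \<le> ereal (c1 * sqrt H1) + ereal ((1 + c1 / 2) * H1) + rel_entropy \<mu> \<mu>' + ereal (c2 * sqrt H2) +
          ereal ((1 + c2 / 2) * H2) + rel_entropy \<nu> \<nu>'"
    proof (cases "rel_entropy \<mu> \<mu>' = \<infinity> \<or> rel_entropy \<nu> \<nu>' = \<infinity>")
      case True
      have "ereal (c1 * sqrt H1) + ereal ((1 + c1 / 2) * H1) + rel_entropy \<mu> \<mu>' + ereal (c2 * sqrt H2) +
          ereal ((1 + c2 / 2) * H2) + rel_entropy \<nu> \<nu>' = \<infinity>"
        using True neM neN by auto
      note eq = this
      show ?thesis unfolding eq by simp
    next
      case False
      then have HmR: "rel_entropy \<mu> \<mu>' < \<infinity>" and HnR: "rel_entropy \<nu> \<nu>' < \<infinity>"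
        by (auto simp: less_top[symmetric])
      obtain K1 where K1: "rel_entropy \<mu> \<mu>' = ereal K1" using neM HmR by (cases "rel_entropy \<mu> \<mu>'") auto
      obtain K2 where K2: "rel_entropy \<nu> \<nu>' = ereal K2" using neN HnR by (cases "rel_entropy \<nu> \<nu>'") auto
      have iN: "integrable \<nu> (\<lambda>y. g' y - g y) \<and> integrable \<nu>' (\<lambda>y. g' y - g y)"
      proof (cases "\<nu>' = \<nu>")
        case True
        have "integrable \<nu> (\<lambda>y. g' y - g y)"
          by (rule nu_struct_a[OF mu mu' nu Hmu HmR c_meas f_meas f'_meas g_meas g'_meas pi _ pi_dens _ M(5) M(6)])
             (use A True in auto)
        then show ?thesis using True by simp
      next
        case False then show ?thesis using N(8,9) by auto
      qed
      have iNm: "integrable \<nu> (\<lambda>y. g y - g' y)" using Bochner_Integration.integrable_minus[OF conjunct1[OF iN]] by simp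
      have L1: "rel_entropy \<pi>' \<pi> = rel_entropy \<mu>' \<mu> + rel_entropy \<nu>' \<nu> +
          ereal ((\<integral>x. f' x - f x \<partial>\<mu>') + (\<integral>y. g' y - g y \<partial>\<nu>'))"
        by (rule dir_a(1)[OF mu mu' nu nu' Hmu Hnu c_meas f_meas f'_meas g_meas g'_meas pi pi'A pi_dens pdA M(6) conjunct2[OF iN]])
      have L2: "rel_entropy \<pi> \<pi>' = rel_entropy \<mu> \<mu>' + rel_entropy \<nu> \<nu>' +
          ereal ((\<integral>x. f x - f' x \<partial>\<mu>) + (\<integral>y. g y - g' y \<partial>\<nu>))"
        by (rule dir_a(1)[OF mu' mu nu' nu HmR HnR c_meas f'_meas f_meas g'_meas g_meas pi'A pi pdA pi_dens iMm iNm])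
      have D2: "(\<integral>y. g' y - g y \<partial>\<nu>') - (\<integral>y. g' y - g y \<partial>\<nu>) \<le> c2 * (sqrt H2 + H2 / 2)"
        using N(7) iN by blast
      define I1 where "I1 = (\<integral>x. f' x - f x \<partial>\<mu>)"
      define I1' where "I1' = (\<integral>x. f' x - f x \<partial>\<mu>')"
      define I2 where "I2 = (\<integral>y. g' y - g y \<partial>\<nu>)"
      define I2' where "I2' = (\<integral>y. g' y - g y \<partial>\<nu>')"
      have "rel_entropy \<pi>' \<pi> + rel_entropy \<pi> \<pi>' = ereal (H1 + H2 + (I1' + I2') + (K1 + K2 + (- I1 + - I2)))"
        unfolding L1 L2 eMm eNm M(1) N(1) K1 K2 I1_def[symmetric] I1'_def[symmetric] I2_def[symmetric] I2'_def[symmetric]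
        by simp
      also have "\<dots> \<le> ereal (c1 * sqrt H1 + (1 + c1 / 2) * H1 + K1 + c2 * sqrt H2 + (1 + c2 / 2) * H2 + K2)"
      proof -
        have a: "I1' - I1 \<le> c1 * (sqrt H1 + H1 / 2)" using M(7) unfolding I1_def I1'_def .
        have b: "I2' - I2 \<le> c2 * (sqrt H2 + H2 / 2)" using D2 unfolding I2_def I2'_def .
        have "c1 * (sqrt H1 + H1 / 2) = c1 * sqrt H1 + (1 + c1 / 2) * H1 - H1" by (simp add: algebra_simps)
        moreover have "c2 * (sqrt H2 + H2 / 2) = c2 * sqrt H2 + (1 + c2 / 2) * H2 - H2" by (simp add: algebra_simps)
        ultimately show ?thesis using a b by simp
      qed
      also have "\<dots> = ereal (c1 * sqrt H1) + ereal ((1 + c1 / 2) * H1) + rel_entropy \<mu> \<mu>' + ereal (c2 * sqrt H2) +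
          ereal ((1 + c2 / 2) * H2) + rel_entropy \<nu> \<nu>'"
        unfolding K1 K2 by simp
      finally show ?thesis .
    qed
    show "rel_entropy \<pi>' \<pi> + rel_entropy \<pi> \<pi>' \<le>
         tail_const \<mu> (\<lambda>x. f' x - f x) * ereal (sqrt (real_of_ereal (rel_entropy \<mu>' \<mu>)))
         + (1 + tail_const \<mu> (\<lambda>x. f' x - f x) / 2) * rel_entropy \<mu>' \<mu>
         + rel_entropy \<mu> \<mu>'
         + tail_const \<nu> (\<lambda>y. g' y - g y) * ereal (sqrt (real_of_ereal (rel_entropy \<nu>' \<nu>)))
         + (1 + tail_const \<nu> (\<lambda>y. g' y - g y) / 2) * rel_entropy \<nu>' \<nu>
         + rel_entropy \<nu> \<nu>'"
      unfolding r1 r2 r3 r4 by (rule main)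
  next
    assume B: "\<pi>' \<in> couplings \<mu>' \<nu>' \<and>
     \<pi>' = density (\<mu> \<Otimes>\<^sub>M \<nu>) (\<lambda>(x,y). ennreal (exp (f' x + g' y - c (x,y))))"
    have iN: "integrable \<nu> (\<lambda>y. g' y - g y) \<and> integrable \<nu>' (\<lambda>y. g' y - g y)"
    proof (cases "\<nu>' = \<nu>")
      case True
      have "integrable \<nu> (\<lambda>y. g' y - g y)"
        by (rule nu_struct_b[OF mu nu c_meas f_meas f'_meas g_meas g'_meas pi _ pi_dens _ M(5) M(6)])
           (use B True in auto)
      then show ?thesis using True by simp
    next
      case False then show ?thesis using N(8,9) by auto
    qed
    have iNm: "integrable \<nu> (\<lambda>y. g y - g' y)" using Bochner_Integration.integrable_minus[OF conjunct1[OF iN]] by simp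
    have L1: "rel_entropy \<pi>' \<pi> = ereal ((\<integral>x. f' x - f x \<partial>\<mu>') + (\<integral>y. g' y - g y \<partial>\<nu>'))"
      by (rule dir_b(1)[OF sm sn c_meas f_meas f'_meas g_meas g'_meas couplingsD(1)[OF pi] _ pi_dens _ M(6) conjunct2[OF iN]])
         (use B in auto)
    have L2: "rel_entropy \<pi> \<pi>' = ereal ((\<integral>x. f x - f' x \<partial>\<mu>) + (\<integral>y. g y - g' y \<partial>\<nu>))"
      by (rule dir_b(1)[OF sm sn c_meas f'_meas f_meas g'_meas g_meas _ pi _ pi_dens iMm iNm])
         (use B couplingsD(1) in auto)
    have D2: "(\<integral>y. g' y - g y \<partial>\<nu>') - (\<integral>y. g' y - g y \<partial>\<nu>) \<le> c2 * (sqrt H2 + H2 / 2)"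
      using N(7) iN by blast
    have "rel_entropy \<pi>' \<pi> + rel_entropy \<pi> \<pi>' =
        ereal (((\<integral>x. f' x - f x \<partial>\<mu>') - (\<integral>x. f' x - f x \<partial>\<mu>)) + ((\<integral>y. g' y - g y \<partial>\<nu>') - (\<integral>y. g' y - g y \<partial>\<nu>)))"
      unfolding L1 L2 eMm eNm by simp
    also have "\<dots> \<le> ereal (c1 * (sqrt H1 + H1 / 2) + c2 * (sqrt H2 + H2 / 2))"
      using M(7) D2 by simp
    also have "\<dots> = tail_const \<mu> (\<lambda>x. f' x - f x) *
           ereal (sqrt (real_of_ereal (rel_entropy \<mu>' \<mu>)) + real_of_ereal (rel_entropy \<mu>' \<mu>) / 2)
         + tail_const \<nu> (\<lambda>y. g' y - g y) *
           ereal (sqrt (real_of_ereal (rel_entropy \<nu>' \<nu>)) + real_of_ereal (rel_entropy \<nu>' \<nu>) / 2)"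
      unfolding M(1) M(3) N(1) by (simp add: N(6))
    finally show "rel_entropy \<pi>' \<pi> + rel_entropy \<pi> \<pi>' \<le> tail_const \<mu> (\<lambda>x. f' x - f x) *
           ereal (sqrt (real_of_ereal (rel_entropy \<mu>' \<mu>)) + real_of_ereal (rel_entropy \<mu>' \<mu>) / 2)
         + tail_const \<nu> (\<lambda>y. g' y - g y) *
           ereal (sqrt (real_of_ereal (rel_entropy \<nu>' \<nu>)) + real_of_ereal (rel_entropy \<nu>' \<nu>) / 2)" .
  qed
qed

end
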